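(* Suppose Assumption (A1) holds and there exists $\epsilon>0$ such that $$1-L_{k-1}-L_k-2\gamma_kL_k\mu-\gamma_k^2\mu^2-\frac{\gamma_k\beta}{2}\ge\epsilon\quad\text{for all integers }k\ge1.$$ Then, for any $x_0,u_0\in\mathcal H$, the sequence $\{x_k\}_{k\in\mathbb N}$ generated by Algorithm NFBHF-M converges weakly to a point in $\operatorname{zer}(A+B+C)$.
   Context: $\mathcal H$ is a real Hilbert space. $\mathcal P(\mathcal H)$ denotes the set of bounded linear operators $S:\mathcal H\to\mathcal H$ that are self-adjoint and strongly positive ($\langle Sx,x\rangle\ge m\|x\|^2$ for some $m>0$ and all $x$); for such $S$, $S^{-1}\in\mathcal P(\mathcal H)$, $\langle x,y\rangle_S:=\langle Sx,y\rangle$ and $\|x\|_S:=\sqrt{\langle Sx,x\rangle}$. For $S\in\mathcal P(\mathcal H)$, a single-valued $T:\mathcal H\to\mathcal H$ is $L$-Lipschitz continuous w.r.t. $S$ if $\|Tx-Ty\|_{S^{-1}}\le L\|x-y\|_S$ for all $x,y$, and is $\beta^{-1}$-cocoercive w.r.t. $S$ ($\beta>0$) if $\langle Tx-Ty,x-y\rangle\ge \beta^{-1}\|Tx-Ty\|_{S^{-1}}^2$ for all $x,y$. $\operatorname{zer}(A+B+C)=\{x\in\mathcal H: 0\in Ax+Bx+Cx\}$. Assumption (A1): fix $S\in\mathcal P(\mathcal H)$. (i) $A:\mathcal H\to2^{\mathcal H}$ is maximally monotone; (ii) $B:\mathcal H\to\mathcal H$ is single-valued, monotone and $\mu$-Lipschitz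 continuous w.r.t. $S$ ($\mu\ge0$); (iii) $C:\mathcal H\to\mathcal H$ is $\beta^{-1}$-cocoercive w.r.t. $S$ for some $\beta>0$; (iv) $\operatorname{zer}(A+B+C)\neq\emptyset$; (v) there is $\gamma>0$ and, for each $k\in\mathbb N$, a step-size $\gamma_k\ge\gamma$, a constant $L_k\in[0,1)$ and a (possibly nonlinear) operator $M_k:\mathcal H\to\mathcal H$ such that $\gamma_kM_k-S$ is $L_k$-Lipschitz continuous w.r.t. $S$. (Under (v), $M_k$ is maximally monotone and strongly monotone, so $(M_k+A)^{-1}$ is single-valued with full domain.) Algorithm NFBHF-M: given $x_0,u_0\in\mathcal H$, for $k=0,1,2,\dots$ $$y_k=(M_k+A)^{-1}\big(M_kx_k-(B+C)x_k+\gamma_k^{-1}u_k\big),\quad x_{k+1}=y_k-\gamma_kS^{-1}By_k+\gamma_kS^{-1}Bx_k,\quad u_{k+1}=(\gamma_kM_k-S)y_k-(\gamma_kM_k-S)x_k.$$ *)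

theory Defs
  imports "HOL-Analysis.Analysis"
begin

text \<open>Real Hilbert space: type class real_inner + complete_space.\<close>

definition strongly_pos_sa :: "('a::real_inner \<Rightarrow> 'a) \<Rightarrow> bool" where
  "strongly_pos_sa S \<longleftrightarrow> bounded_linear S \<and> (\<forall>x y. inner (S x) y = inner x (S y))
     \<and> (\<exists>m>0. \<forall>x. inner (S x) x \<ge> m * (norm x)\<^sup>2)"

definition normS :: "('a::real_inner \<Rightarrow> 'a) \<Rightarrow> 'a \<Rightarrow> real" where
  "normS S x = sqrt (inner (S x) x)"

definition lipschitz_wrt :: "('a::real_inner \<Rightarrow> 'a) \<Rightarrow> real \<Rightarrow> ('a \<Rightarrow> 'a) \<Rightarrow> bool" where
  "lipschitz_wrt S L T \<longleftrightarrow> (\<forall>x y. normS (inv S) (T x - T y) \<le> L * normS S (x - y))"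

definition cocoercive_wrt :: "('a::real_inner \<Rightarrow> 'a) \<Rightarrow> real \<Rightarrow> ('a \<Rightarrow> 'a) \<Rightarrow> bool" where
  "cocoercive_wrt S \<beta> T \<longleftrightarrow>
     (\<forall>x y. inner (T x - T y) (x - y) \<ge> (1 / \<beta>) * (normS (inv S) (T x - T y))\<^sup>2)"

definition monotone_op :: "('a::real_inner \<Rightarrow> 'a set) \<Rightarrow> bool" where
  "monotone_op A \<longleftrightarrow> (\<forall>x y u v. u \<in> A x \<longrightarrow> v \<in> A y \<longrightarrow> inner (u - v) (x - y) \<ge> 0)"

definition maximal_monotone :: "('a::real_inner \<Rightarrow> 'a set) \<Rightarrow> bool" where
  "maximal_monotone A \<longleftrightarrow> monotone_op A \<and>
     (\<forall>A'. monotone_op A' \<longrightarrow> (\<forall>x. A x \<subseteq> A' x) \<longrightarrow> A' = A)"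

definition monotone_fun :: "('a::real_inner \<Rightarrow> 'a) \<Rightarrow> bool" where
  "monotone_fun B \<longleftrightarrow> (\<forall>x y. inner (B x - B y) (x - y) \<ge> 0)"

definition zer3 :: "('a::real_vector \<Rightarrow> 'a set) \<Rightarrow> ('a \<Rightarrow> 'a) \<Rightarrow> ('a \<Rightarrow> 'a) \<Rightarrow> 'a set" where
  "zer3 A B C = {x. 0 \<in> (\<lambda>a. a + B x + C x) ` A x}"

definition weakly_converges :: "(nat \<Rightarrow> 'a::real_inner) \<Rightarrow> 'a \<Rightarrow> bool" where
  "weakly_converges x z \<longleftrightarrow> (\<forall>y. (\<lambda>k. inner (x k) y) \<longlonglongrightarrow> inner z y)"

end

theory Submission
  imports Defs "HOL-Library.Diagonal_Subsequence" "HOL-Library.Infinite_Set"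
begin

lemma avg_lt_aux: fixes X A B C Y :: real
  assumes "X \<le> (A + B) / 2" "A \<le> C" "B \<le> C" "C < Y" shows "X < Y"
proof -
  have "A + B \<le> 2 * C" using assms by simp
  then have "(A + B) / 2 \<le> C" by simp
  then show ?thesis using assms by simp
qed

lemma strongly_convex_min:
  fixes f :: "'b::{real_inner,complete_space} \<Rightarrow> real" and D :: "'b set"
  assumes ne: "D \<noteq> {}" and lb: "\<And>p. p \<in> D \<Longrightarrow> f p \<ge> 0" and c: "c > 0"
    and mid: "\<And>p q. p \<in> D \<Longrightarrow> q \<in> D \<Longrightarrow>
        (1/2) *\<^sub>R (p + q) \<in> D \<and> f ((1/2) *\<^sub>R (p + q)) \<le> (f p + f q) / 2 - c * (norm (p - q))\<^sup>2"
    and cl: "\<And>s l m. (\<And>n. s n \<in> D) \<Longrightarrow> s \<longlonglongrightarrow> l \<Longrightarrow> (\<lambda>n. f (s n)) \<longlonglongrightarrow> m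
        \<Longrightarrow> l \<in> D \<and> f l \<le> m"
  shows "\<exists>p\<in>D. \<forall>q\<in>D. f p \<le> f q"
proof -
  define m where "m = Inf (f ` D)"
  have bdd: "bdd_below (f ` D)" using lb by (intro bdd_belowI2[where m=0]) auto
  have mle: "\<And>q. q \<in> D \<Longrightarrow> m \<le> f q" unfolding m_def using bdd by (auto intro: cInf_lower)
  have "\<forall>n. \<exists>p. p \<in> D \<and> f p < m + 1 / (real n + 1)"
  proof
    fix n
    have "Inf (f ` D) < m + 1 / (real n + 1)" unfolding m_def by simp
    then have "\<exists>v\<in>f ` D. v < m + 1 / (real n + 1)"
      by (rule cInf_lessD[rotated]) (use ne in simp)
    then show "\<exists>p. p \<in> D \<and> f p < m + 1 / (real n + 1)" by auto
  qed
  then obtain s where s: "\<And>n. s n \<in> D" "\<And>n. f (s n) < m + 1 / (real n + 1)"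
    by metis
  have key: "c * (norm (s n - s k))\<^sup>2 \<le> (1 / (real n + 1) + 1 / (real k + 1)) / 2" for n k
  proof -
    have "m \<le> f ((1/2) *\<^sub>R (s n + s k))" using mid[OF s(1) s(1)] mle by blast
    also have "\<dots> \<le> (f (s n) + f (s k)) / 2 - c * (norm (s n - s k))\<^sup>2"
      using mid[OF s(1) s(1)] by blast
    finally have h: "m \<le> (f (s n) + f (s k)) / 2 - c * (norm (s n - s k))\<^sup>2" .
    have "\<And>p q. f (s n) < m + p \<Longrightarrow> f (s k) < m + q \<Longrightarrow> c * (norm (s n - s k))\<^sup>2 \<le> (p + q) / 2"
      using h by (simp add: field_simps)
    from this[OF s(2)[of n] s(2)[of k]] show ?thesis .
  qed
  have "Cauchy s"
  proof (rule metric_CauchyI)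
    fix e :: real assume e: "e > 0"
    obtain N :: nat where N0: "1 / (c * e\<^sup>2) < real N"
      using reals_Archimedean2 by blast
    have N: "1 / (c * e\<^sup>2) < real N + 1" using N0 by linarith
    have Npos: "1 / (real N + 1) < c * e\<^sup>2"
      using N c e by (simp add: field_simps)
    show "\<exists>M. \<forall>m\<ge>M. \<forall>n\<ge>M. dist (s m) (s n) < e"
    proof (intro exI allI impI)
      fix n k assume nk: "N \<le> n" "N \<le> k"
      have a: "1 / (real n + 1) \<le> 1 / (real N + 1)" using nk by (simp add: frac_le)
      have b: "1 / (real k + 1) \<le> 1 / (real N + 1)" using nk by (simp add: frac_le)
      have "c * (norm (s n - s k))\<^sup>2 < c * e\<^sup>2"
        using avg_lt_aux[OF key[of n k] a b Npos] .
      then have "(norm (s n - s k))\<^sup>2 < e\<^sup>2" using c by simp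
      then have "norm (s n - s k) < e" using e by (simp add: power_less_imp_less_base)
      then show "dist (s n) (s k) < e" by (simp add: dist_norm)
    qed
  qed
  then obtain l where l: "s \<longlonglongrightarrow> l" using Cauchy_convergent_iff convergent_def by blast
  have fm: "(\<lambda>n. f (s n)) \<longlonglongrightarrow> m"
  proof (rule real_tendsto_sandwich[of "\<lambda>n. m" _ _ "\<lambda>n. m + 1 / (real n + 1)"])
    show "\<forall>\<^sub>F n in sequentially. m \<le> f (s n)" using mle s by auto
    show "\<forall>\<^sub>F n in sequentially. f (s n) \<le> m + 1 / (real n + 1)" using s(2) by (intro always_eventually allI less_imp_le) simp
    show "(\<lambda>n. m) \<longlonglongrightarrow> m" by simp
    have "(\<lambda>n. 1 / (real n + 1)) \<longlonglongrightarrow> 0" using LIMSEQ_inverse_real_of_nat by (simp add: inverse_eq_divide add.commute)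
    then show "(\<lambda>n. m + 1 / (real n + 1)) \<longlonglongrightarrow> m" using tendsto_add[of "\<lambda>n. m" m] by fastforce
  qed
  from cl[OF s(1) l fm] show ?thesis using mle by force
qed

lemma norm_mid_sq:
  fixes p q :: "'b::real_inner"
  shows "(norm ((1/2) *\<^sub>R (p + q)))\<^sup>2 = (norm p)\<^sup>2 / 2 + (norm q)\<^sup>2 / 2 - (norm (p - q))\<^sup>2 / 4"
  by (simp add: power2_norm_eq_inner inner_simps inner_commute[of q p] field_simps)

lemma norm_mid_sq2:
  fixes p q y :: "'b::real_inner"
  shows "(norm (y - (1/2) *\<^sub>R (p + q)))\<^sup>2 = (norm (y - p))\<^sup>2 / 2 + (norm (y - q))\<^sup>2 / 2 - (norm (p - q))\<^sup>2 / 4"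
proof -
  have yy: "(1/2) *\<^sub>R y + (1/2) *\<^sub>R y = y" by (simp add: scaleR_add_left[symmetric])
  have "y - (1/2) *\<^sub>R (p + q) = (1/2) *\<^sub>R ((y - p) + (y - q))" using yy by (simp add: algebra_simps)
  moreover have "p - q = (y - q) - (y - p)" by simp
  ultimately show ?thesis using norm_mid_sq[of "y - p" "y - q"] by (simp add: norm_minus_commute)
qed

lemma norm_add_scaled_sq:
  fixes p v :: "'b::real_inner"
  shows "(norm (p + t *\<^sub>R v))\<^sup>2 = (norm p)\<^sup>2 + 2 * t * inner p v + t\<^sup>2 * (norm v)\<^sup>2"
  unfolding power2_norm_eq_inner by (simp add: power2_norm_eq_inner inner_simps inner_commute[of v p] power2_eq_square algebra_simps)

lemma quad_zero:
  fixes a b :: real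
  assumes "b \<ge> 0" and h: "\<And>t. 0 \<le> - 2 * t * a + t\<^sup>2 * b"
  shows "a = 0"
proof -
  define t where "t = a / (b + 1)"
  have at: "a = t * (b + 1)" unfolding t_def using assms(1) by simp
  have "0 \<le> - 2 * t * a + t\<^sup>2 * b" by (rule h)
  also have "\<dots> = - (t\<^sup>2 * (b + 2))" unfolding at by (simp add: algebra_simps power2_eq_square)
  finally have "t\<^sup>2 * (b + 2) \<le> 0" by simp
  then have "t\<^sup>2 \<le> 0" using assms(1) by (simp add: mult_le_0_iff)
  then have "t = 0" by simp
  then show ?thesis using at by simp
qed

lemma small_t_nonneg:
  fixes \<alpha> \<beta> :: real
  assumes h: "\<And>t. 0 < t \<Longrightarrow> t \<le> 1 \<Longrightarrow> 0 \<le> \<alpha> + t * \<beta>"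
  shows "0 \<le> \<alpha>"
proof (rule ccontr)
  assume "\<not> 0 \<le> \<alpha>"
  then have a: "\<alpha> < 0" by simp
  define t where "t = min 1 (- \<alpha> / (2 * (\<bar>\<beta>\<bar> + 1)))"
  have t0: "0 < t" unfolding t_def using a by (simp add: field_simps)
  have t1: "t \<le> 1" unfolding t_def by simp
  have t2: "t \<le> - \<alpha> / (2 * (\<bar>\<beta>\<bar> + 1))" unfolding t_def by simp
  have "t * \<beta> \<le> t * \<bar>\<beta>\<bar>" using t0 by (simp add: mult_left_mono)
  also have "\<dots> \<le> (- \<alpha> / (2 * (\<bar>\<beta>\<bar> + 1))) * \<bar>\<beta>\<bar>" by (rule mult_right_mono[OF t2]) simp
  also have "\<dots> \<le> - \<alpha> / 2"
  proof -
    have "\<bar>\<beta>\<bar> / (\<bar>\<beta>\<bar> + 1) \<le> 1" by simp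
    then have "(- \<alpha> / 2) * (\<bar>\<beta>\<bar> / (\<bar>\<beta>\<bar> + 1)) \<le> (- \<alpha> / 2) * 1"
      using a by (intro mult_left_mono) auto
    then show ?thesis by (simp add: field_simps)
  qed
  finally have "\<alpha> + t * \<beta> < 0" using a by linarith
  with h[OF t0 t1] show False by linarith
qed

lemma proj_subspace:
  fixes V :: "'a::{real_inner,complete_space} set"
  assumes cl: "closed V" and z: "0 \<in> V" and add: "\<And>u v. u \<in> V \<Longrightarrow> v \<in> V \<Longrightarrow> u + v \<in> V"
    and sc: "\<And>a v. v \<in> V \<Longrightarrow> a *\<^sub>R v \<in> V"
  shows "\<exists>p\<in>V. \<forall>v\<in>V. inner (y - p) v = 0"
proof -
  have "\<exists>p\<in>V. \<forall>q\<in>V. (\<lambda>q. (norm (y - q))\<^sup>2) p \<le> (\<lambda>q. (norm (y - q))\<^sup>2) q"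
  proof (rule strongly_convex_min[where c = "1/4"])
    show "V \<noteq> {}" using z by auto
    show "\<And>p. p \<in> V \<Longrightarrow> 0 \<le> (norm (y - p))\<^sup>2" by simp
    show "(0::real) < 1/4" by simp
    fix p q assume pq: "p \<in> V" "q \<in> V"
    show "(1/2) *\<^sub>R (p + q) \<in> V \<and> (norm (y - (1/2) *\<^sub>R (p + q)))\<^sup>2
           \<le> ((norm (y - p))\<^sup>2 + (norm (y - q))\<^sup>2) / 2 - 1/4 * (norm (p - q))\<^sup>2"
      using pq add sc norm_mid_sq2[of y p q] by simp
  next
    fix s l m assume s: "\<And>n::nat. s n \<in> V" "s \<longlonglongrightarrow> l" "(\<lambda>n. (norm (y - s n))\<^sup>2) \<longlonglongrightarrow> m"
    have "l \<in> V" using cl s(1,2) closed_sequentially by blast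
    moreover have "(\<lambda>n. (norm (y - s n))\<^sup>2) \<longlonglongrightarrow> (norm (y - l))\<^sup>2"
      by (intro tendsto_intros s(2))
    ultimately show "l \<in> V \<and> (norm (y - l))\<^sup>2 \<le> m" using s(3) LIMSEQ_unique by fastforce
  qed
  then obtain p where p: "p \<in> V" "\<And>q. q \<in> V \<Longrightarrow> (norm (y - p))\<^sup>2 \<le> (norm (y - q))\<^sup>2" by auto
  show ?thesis
  proof (intro bexI[OF _ p(1)] ballI)
    fix v assume v: "v \<in> V"
    have "0 \<le> - 2 * t * inner (y - p) v + t\<^sup>2 * (norm v)\<^sup>2" for t
    proof -
      have "p + t *\<^sub>R v \<in> V" using add sc p(1) v by auto
      from p(2)[OF this] have "(norm (y - p))\<^sup>2 \<le> (norm ((y - p) + (- t) *\<^sub>R v))\<^sup>2" by (simp add: algebra_simps)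
      then show ?thesis unfolding norm_add_scaled_sq by simp
    qed
    then show "inner (y - p) v = 0" by (intro quad_zero[of "(norm v)\<^sup>2"]) auto
  qed
qed

lemma maxmono_char:
  assumes mm: "maximal_monotone A"
    and h: "\<And>a b. b \<in> A a \<Longrightarrow> inner (u - b) (x - a) \<ge> 0"
  shows "u \<in> A x"
proof -
  define A' where "A' = (\<lambda>z. if z = x then insert u (A z) else A z)"
  have mA: "monotone_op A" using mm unfolding maximal_monotone_def by simp
  have "monotone_op A'"
    unfolding monotone_op_def
  proof (intro allI impI)
    fix x1 x2 u1 u2 assume u1: "u1 \<in> A' x1" and u2: "u2 \<in> A' x2"
    consider "u1 \<in> A x1" "u2 \<in> A x2" | "x1 = x" "u1 = u" "u2 \<in> A x2" | "u1 \<in> A x1" "x2 = x" "u2 = u"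
      | "x1 = x" "u1 = u" "x2 = x" "u2 = u"
      using u1 u2 unfolding A'_def by (auto split: if_splits)
    then show "inner (u1 - u2) (x1 - x2) \<ge> 0"
    proof cases
      case 1 then show ?thesis using mA unfolding monotone_op_def by blast
    next
      case 2 then show ?thesis using h by blast
    next
      case 3
      have "inner (u1 - u2) (x1 - x2) = inner (u - u1) (x - x1)"
        using 3 by (simp add: inner_diff_left inner_diff_right)
      then show ?thesis using h[OF 3(1)] by simp
    next
      case 4 then show ?thesis by simp
    qed
  qed
  moreover have "\<forall>z. A z \<subseteq> A' z" unfolding A'_def by auto
  ultimately have "A' = A" using mm unfolding maximal_monotone_def by blast
  moreover have "u \<in> A' x" unfolding A'_def by simp
  ultimately show ?thesis by simp
qed

lemma minty0:
  fixes A :: "'a::{real_inner,complete_space} \<Rightarrow> 'a set"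
  assumes mA: "monotone_op A"
    and ch: "\<And>x u. (\<And>a b. b \<in> A a \<Longrightarrow> inner (u - b) (x - a) \<ge> 0) \<Longrightarrow> u \<in> A x"
  shows "\<exists>x. - x \<in> A x"
proof -
  define G :: "('a \<times> 'a) set" where "G = {(a,b). b \<in> A a}"
  define \<phi> :: "'a \<times> 'a \<Rightarrow> 'a \<times> 'a \<Rightarrow> real"
    where "\<phi> g p = inner (fst p) (snd g) + inner (fst g) (snd p) - inner (fst g) (snd g)" for g p
  define D where "D = {p. bdd_above ((\<lambda>g. \<phi> g p) ` G)}"
  define F where "F p = (SUP g\<in>G. \<phi> g p)" for p
  define f where "f p = F p + (norm p)\<^sup>2 / 2" for p
  have Gne: "G \<noteq> {}"
  proof
    assume G0: "G = {}"
    have "0 \<in> A 0"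
    proof (rule ch)
      fix a b assume "b \<in> A a"
      then have "(a, b) \<in> G" by (simp add: G_def)
      then show "0 \<le> inner (0 - b) (0 - a)" using G0 by simp
    qed
    then have "(0, 0) \<in> G" by (simp add: G_def)
    then show False using G0 by simp
  qed
  have mono_G: "inner (snd g - snd h) (fst g - fst h) \<ge> 0" if "g \<in> G" "h \<in> G" for g h
    using mA that unfolding monotone_op_def G_def by auto
  have phi_le: "\<phi> h g \<le> inner (fst g) (snd g)" if "g \<in> G" "h \<in> G" for g h
    using mono_G[OF that] unfolding \<phi>_def by (simp add: inner_diff_left inner_diff_right inner_commute)
  have FG: "g \<in> D \<and> F g = inner (fst g) (snd g)" if g: "g \<in> G" for g
  proof -
    have bdd: "bdd_above ((\<lambda>h. \<phi> h g) ` G)"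
      by (rule bdd_aboveI2[where M="inner (fst g) (snd g)"]) (rule phi_le[OF g])
    have "F g \<le> inner (fst g) (snd g)" unfolding F_def using phi_le[OF g] Gne by (auto intro: cSUP_least)
    moreover have "\<phi> g g \<le> F g" unfolding F_def using bdd g by (rule cSUP_upper2) simp
    moreover have "\<phi> g g = inner (fst g) (snd g)" unfolding \<phi>_def by simp
    ultimately show ?thesis using bdd unfolding D_def by simp
  qed
  have Fge: "F p \<ge> inner (fst p) (snd p)" if p: "p \<in> D" for p
  proof (rule ccontr)
    assume "\<not> F p \<ge> inner (fst p) (snd p)"
    then have lt: "F p < inner (fst p) (snd p)" by simp
    have "snd p \<in> A (fst p)"
    proof (rule ch)
      fix a b assume b: "b \<in> A a"
      then have "(a,b) \<in> G" by (simp add: G_def)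
      then have "\<phi> (a,b) p \<le> F p" using p unfolding F_def D_def by (auto intro: cSUP_upper)
      then have "\<phi> (a,b) p \<le> inner (fst p) (snd p)" using lt by simp
      then show "inner (snd p - b) (fst p - a) \<ge> 0"
        unfolding \<phi>_def by (simp add: inner_diff_left inner_diff_right inner_commute)
    qed
    then have "p \<in> G" by (simp add: G_def case_prod_beta)
    then have "F p = inner (fst p) (snd p)" using FG by blast
    with lt show False by simp
  qed
  have phi_comb: "\<phi> g ((1-t) *\<^sub>R p + t *\<^sub>R q) = (1-t) * \<phi> g p + t * \<phi> g q" for g p q t
    unfolding \<phi>_def by (simp add: inner_simps algebra_simps)
  have conv: "(1-t) *\<^sub>R p + t *\<^sub>R q \<in> D \<and> F ((1-t) *\<^sub>R p + t *\<^sub>R q) \<le> (1-t) * F p + t * F q"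
    if pq: "p \<in> D" "q \<in> D" and t: "0 \<le> t" "t \<le> 1" for p q t
  proof -
    have le: "\<phi> g ((1-t) *\<^sub>R p + t *\<^sub>R q) \<le> (1-t) * F p + t * F q" if g: "g \<in> G" for g
    proof -
      have "\<phi> g p \<le> F p" "\<phi> g q \<le> F q" using g pq unfolding F_def D_def by (auto intro: cSUP_upper)
      then show ?thesis unfolding phi_comb using t by (intro add_mono mult_left_mono) auto
    qed
    have "bdd_above ((\<lambda>g. \<phi> g ((1-t) *\<^sub>R p + t *\<^sub>R q)) ` G)" by (rule bdd_aboveI2) (erule le)
    moreover have "F ((1-t) *\<^sub>R p + t *\<^sub>R q) \<le> (1-t) * F p + t * F q"
      unfolding F_def[of "(1-t) *\<^sub>R p + t *\<^sub>R q"] by (rule cSUP_least[OF Gne]) (erule le)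
    ultimately show ?thesis unfolding D_def by simp
  qed
  have normp: "(norm p)\<^sup>2 = inner (fst p) (fst p) + inner (snd p) (snd p)" for p :: "'a \<times> 'a"
    by (simp add: power2_norm_eq_inner inner_prod_def)
  have fnn: "0 \<le> f p" if p: "p \<in> D" for p
  proof -
    have "0 \<le> inner (fst p + snd p) (fst p + snd p)" by simp
    then have "0 \<le> 2 * inner (fst p) (snd p) + inner (fst p) (fst p) + inner (snd p) (snd p)"
      by (simp add: inner_simps inner_commute)
    then show ?thesis using Fge[OF p] unfolding f_def normp add_divide_distrib by linarith
  qed
  have "\<exists>p\<in>D. \<forall>q\<in>D. f p \<le> f q"
  proof (rule strongly_convex_min[where c = "1/8"])
    obtain g where "g \<in> G" using Gne by auto
    then show "D \<noteq> {}" using FG by blast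
    show "\<And>p. p \<in> D \<Longrightarrow> 0 \<le> f p" by (rule fnn)
    show "(0::real) < 1/8" by simp
  next
    fix p q assume pq: "p \<in> D" "q \<in> D"
    have e: "(1 - 1/2) *\<^sub>R p + (1/2) *\<^sub>R q = (1/2) *\<^sub>R (p + q)" by (simp add: scaleR_add_right)
    have c: "(1/2) *\<^sub>R (p + q) \<in> D \<and> F ((1/2) *\<^sub>R (p + q)) \<le> (1 - 1/2) * F p + (1/2) * F q"
      using conv[OF pq, of "1/2"] unfolding e by simp
    then show "(1/2) *\<^sub>R (p + q) \<in> D \<and> f ((1/2) *\<^sub>R (p + q)) \<le> (f p + f q) / 2 - 1/8 * (norm (p - q))\<^sup>2"
      unfolding f_def norm_mid_sq by (simp add: field_simps)
  next
    fix s l m assume s: "\<And>n::nat. s n \<in> D" "s \<longlonglongrightarrow> l" "(\<lambda>n. f (s n)) \<longlonglongrightarrow> m"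
    have le: "\<phi> g l \<le> m - (norm l)\<^sup>2 / 2" if g: "g \<in> G" for g
    proof (rule LIMSEQ_le)
      show "(\<lambda>n. \<phi> g (s n)) \<longlonglongrightarrow> \<phi> g l" unfolding \<phi>_def by (intro tendsto_intros s(2))
      show "(\<lambda>n. f (s n) - (norm (s n))\<^sup>2 / 2) \<longlonglongrightarrow> m - (norm l)\<^sup>2 / 2" by (intro tendsto_intros s) simp
      show "\<exists>N. \<forall>n\<ge>N. \<phi> g (s n) \<le> f (s n) - (norm (s n))\<^sup>2 / 2"
      proof (intro exI allI impI)
        fix n :: nat
        have "bdd_above ((\<lambda>g. \<phi> g (s n)) ` G)" using s(1)[of n] unfolding D_def by simp
        then have "\<phi> g (s n) \<le> F (s n)" unfolding F_def using g by (intro cSUP_upper)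
        then show "\<phi> g (s n) \<le> f (s n) - (norm (s n))\<^sup>2 / 2" unfolding f_def by simp
      qed
    qed
    have "bdd_above ((\<lambda>g. \<phi> g l) ` G)" by (rule bdd_aboveI2) (erule le)
    moreover have "F l \<le> m - (norm l)\<^sup>2 / 2" unfolding F_def by (rule cSUP_least[OF Gne]) (erule le)
    ultimately show "l \<in> D \<and> f l \<le> m" unfolding D_def f_def by simp
  qed
  then obtain p0 where p0: "p0 \<in> D" "\<And>q. q \<in> D \<Longrightarrow> f p0 \<le> f q" by blast
  have var: "0 \<le> F g - F p0 + inner p0 (g - p0)" if g: "g \<in> G" for g
  proof -
    have gD: "g \<in> D" using FG g by blast
    show ?thesis
    proof (rule small_t_nonneg[where \<beta> = "(norm (g - p0))\<^sup>2 / 2"])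
      fix t :: real assume t: "0 < t" "t \<le> 1"
      have c: "(1-t) *\<^sub>R p0 + t *\<^sub>R g \<in> D \<and> F ((1-t) *\<^sub>R p0 + t *\<^sub>R g) \<le> (1-t) * F p0 + t * F g"
        using conv[OF p0(1) gD] t by simp
      have eq: "(1-t) *\<^sub>R p0 + t *\<^sub>R g = p0 + t *\<^sub>R (g - p0)" by (simp add: algebra_simps)
      have "f p0 \<le> f ((1-t) *\<^sub>R p0 + t *\<^sub>R g)" using p0(2) c by blast
      also have "\<dots> \<le> (1-t) * F p0 + t * F g + (norm (p0 + t *\<^sub>R (g - p0)))\<^sup>2 / 2"
        using c eq unfolding f_def by simp
      also have "(norm (p0 + t *\<^sub>R (g - p0)))\<^sup>2 = (norm p0)\<^sup>2 + 2 * t * inner p0 (g - p0) + t\<^sup>2 * (norm (g - p0))\<^sup>2"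
        by (rule norm_add_scaled_sq)
      finally have "0 \<le> t * (F g - F p0 + inner p0 (g - p0) + t * ((norm (g - p0))\<^sup>2 / 2))"
        unfolding f_def by (simp add: field_simps power2_eq_square)
      then show "0 \<le> F g - F p0 + inner p0 (g - p0) + t * ((norm (g - p0))\<^sup>2 / 2)"
        using t by (simp add: zero_le_mult_iff)
    qed
  qed
  obtain x0 u0 where p0eq: "p0 = (x0, u0)" by (cases p0)
  have F0: "F p0 \<ge> inner x0 u0" using Fge[OF p0(1)] p0eq by simp
  have key: "inner (a + u0) (b + x0) \<ge> inner (x0 + u0) (x0 + u0)" if b: "b \<in> A a" for a b
  proof -
    from b have g: "(a,b) \<in> G" by (simp add: G_def)
    have "F (a,b) = inner a b" using FG[OF g] by simp
    with var[OF g] p0eq have h: "0 \<le> inner a b - F p0 + inner x0 (a - x0) + inner u0 (b - u0)"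
      by (simp add: inner_prod_def)
    have e1: "inner (a + u0) (b + x0) = inner a b + inner x0 a + inner u0 b + inner x0 u0"
      by (simp add: inner_simps inner_commute)
    have e2: "inner (x0 + u0) (x0 + u0) = inner x0 x0 + 2 * inner x0 u0 + inner u0 u0"
      by (simp add: inner_simps inner_commute)
    have e3: "inner x0 (a - x0) + inner u0 (b - u0) = inner x0 a - inner x0 x0 + inner u0 b - inner u0 u0"
      by (simp add: inner_simps)
    show ?thesis using h F0 e1 e2 e3 by linarith
  qed
  have m: "- x0 \<in> A (- u0)"
  proof (rule ch)
    fix a b assume b: "b \<in> A a"
    have "inner (- x0 - b) (- u0 - a) = inner (a + u0) (b + x0)"
      by (simp add: inner_simps inner_commute)
    also have "\<dots> \<ge> inner (x0 + u0) (x0 + u0)" by (rule key[OF b])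
    finally show "0 \<le> inner (- x0 - b) (- u0 - a)" by (meson inner_ge_zero order_trans)
  qed
  from key[OF m] have "inner (x0 + u0) (x0 + u0) \<le> 0" by simp
  then have "x0 + u0 = 0" by (meson antisym inner_ge_zero inner_eq_zero_iff)
  then have "- u0 = x0" by (simp add: add_eq_0_iff)
  with m show ?thesis by auto
qed

lemma resolvent_exists:
  fixes A :: "'a::{real_inner,complete_space} \<Rightarrow> 'a set"
  assumes mm: "maximal_monotone A" and l: "l > 0"
  shows "\<exists>x. (1/l) *\<^sub>R (z - x) \<in> A x"
proof -
  define A2 where "A2 y = (\<lambda>b. l *\<^sub>R b) ` A (y + z)" for y
  have mA: "monotone_op A" using mm unfolding maximal_monotone_def by simp
  have "monotone_op A2"
    unfolding monotone_op_def
  proof (intro allI impI)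
    fix x1 x2 u1 u2 assume "u1 \<in> A2 x1" "u2 \<in> A2 x2"
    then obtain b1 b2 where b: "b1 \<in> A (x1 + z)" "b2 \<in> A (x2 + z)" "u1 = l *\<^sub>R b1" "u2 = l *\<^sub>R b2"
      unfolding A2_def by auto
    have "inner (b1 - b2) ((x1 + z) - (x2 + z)) \<ge> 0" using mA b(1,2) unfolding monotone_op_def by blast
    then have "0 \<le> l * inner (b1 - b2) (x1 - x2)" using l by simp
    then show "0 \<le> inner (u1 - u2) (x1 - x2)" using b(3,4)
      by (simp add: inner_diff_left inner_diff_right algebra_simps)
  qed
  moreover have "u \<in> A2 x" if h: "\<And>a b. b \<in> A2 a \<Longrightarrow> inner (u - b) (x - a) \<ge> 0" for x u
  proof -
    have "(1/l) *\<^sub>R u \<in> A (x + z)"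
    proof (rule maxmono_char[OF mm])
      fix a b assume b: "b \<in> A a"
      then have "l *\<^sub>R b \<in> A2 (a - z)" unfolding A2_def by (simp add: imageI)
      from h[OF this] have "0 \<le> inner (u - l *\<^sub>R b) (x - (a - z))" .
      then have "0 \<le> (1/l) * inner (u - l *\<^sub>R b) (x - (a - z))" using l by simp
      also have "\<dots> = inner ((1/l) *\<^sub>R u - b) (x + z - a)"
        using l by (simp add: inner_diff_left inner_diff_right algebra_simps)
      finally show "0 \<le> inner ((1/l) *\<^sub>R u - b) (x + z - a)" .
    qed
    then have "l *\<^sub>R ((1/l) *\<^sub>R u) \<in> A2 x" unfolding A2_def by blast
    then show ?thesis using l by simp
  qed
  ultimately obtain y where y: "- y \<in> A2 y" using minty0[of A2] by blast
  then obtain b where b: "b \<in> A (y + z)" "- y = l *\<^sub>R b" unfolding A2_def by auto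
  have "(1/l) *\<^sub>R (z - (y + z)) = b" using b(2) l by (simp add: field_simps)
  then show ?thesis using b(1) by metis
qed

lemma resolvent_nonexp:
  fixes A :: "'a::real_inner \<Rightarrow> 'a set"
  assumes mA: "monotone_op A" and l: "l > 0"
    and x1: "(1/l) *\<^sub>R (z1 - x1) \<in> A x1" and x2: "(1/l) *\<^sub>R (z2 - x2) \<in> A x2"
  shows "norm (x1 - x2) \<le> norm (z1 - z2)"
proof -
  have "0 \<le> inner ((1/l) *\<^sub>R (z1 - x1) - (1/l) *\<^sub>R (z2 - x2)) (x1 - x2)"
    using mA x1 x2 unfolding monotone_op_def by blast
  also have "\<dots> = (1/l) * (inner (z1 - z2) (x1 - x2) - inner (x1 - x2) (x1 - x2))"
    by (simp add: inner_diff_left inner_diff_right algebra_simps)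
  finally have "inner (x1 - x2) (x1 - x2) \<le> inner (z1 - z2) (x1 - x2)" using l
    by (simp add: zero_le_divide_iff)
  also have "\<dots> \<le> norm (z1 - z2) * norm (x1 - x2)" by (rule norm_cauchy_schwarz)
  finally have "(norm (x1 - x2))\<^sup>2 \<le> norm (z1 - z2) * norm (x1 - x2)"
    by (simp add: power2_norm_eq_inner)
  then show ?thesis
    by (metis mult_le_cancel_right norm_ge_zero power2_eq_square linorder_not_le mult_zero_right order_trans)
qed

lemma maxmono_sum_closed:
  fixes A :: "'a::{real_inner,complete_space} \<Rightarrow> 'a set" and D :: "'a \<Rightarrow> 'a"
  assumes mm: "maximal_monotone A"
    and DL: "\<And>x y. norm (D x - D y) \<le> K * norm (x - y)"
    and h: "\<And>p q. q \<in> A p \<Longrightarrow> inner (q + D p) (p - w) \<ge> 0"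
  shows "- D w \<in> A w"
proof -
  have mA: "monotone_op A" using mm unfolding maximal_monotone_def by simp
  define l where "l = 1 / (2 * (\<bar>K\<bar> + 1))"
  have l: "l > 0" unfolding l_def by simp
  have lK: "l * \<bar>K\<bar> \<le> 1/2" unfolding l_def by (simp add: field_simps)
  define J where "J z = (SOME x. (1/l) *\<^sub>R (z - x) \<in> A x)" for z
  have J: "(1/l) *\<^sub>R (z - J z) \<in> A (J z)" for z
    unfolding J_def using resolvent_exists[OF mm l, of z] by (rule someI_ex)
  define T where "T p = J (w - l *\<^sub>R D p)" for p
  have "\<exists>!p. T p = p"
  proof (rule banach_fix_type[where c = "1/2"])
    show "(0::real) \<le> 1/2" "(1/2::real) < 1" by auto
    show "\<forall>x y. dist (T x) (T y) \<le> 1/2 * dist x y"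
    proof (intro allI)
      fix x y
      have "norm (T x - T y) \<le> norm ((w - l *\<^sub>R D x) - (w - l *\<^sub>R D y))"
        unfolding T_def by (rule resolvent_nonexp[OF mA l J J])
      also have "\<dots> = l * norm (D x - D y)"
        using l by (simp add: scaleR_diff_right[symmetric] norm_minus_commute)
      also have "\<dots> \<le> l * (\<bar>K\<bar> * norm (x - y))"
        using DL[of x y] l by (intro mult_left_mono) (auto intro: order_trans[OF _ mult_right_mono])
      also have "\<dots> \<le> 1/2 * norm (x - y)"
      proof -
        have "(l * \<bar>K\<bar>) * norm (x - y) \<le> (1/2) * norm (x - y)" by (rule mult_right_mono[OF lK]) simp
        then show ?thesis by (metis mult.assoc)
      qed
      finally show "dist (T x) (T y) \<le> 1/2 * dist x y" by (simp add: dist_norm)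
    qed
  qed
  then obtain p where p: "T p = p" by blast
  define q where "q = (1/l) *\<^sub>R ((w - l *\<^sub>R D p) - p)"
  have q: "q \<in> A p" unfolding q_def using J[of "w - l *\<^sub>R D p"] p unfolding T_def by simp
  have "q + D p = (1/l) *\<^sub>R (w - p)" unfolding q_def using l by (simp add: algebra_simps)
  with h[OF q] have "0 \<le> (1/l) * inner (w - p) (p - w)" by simp
  then have "0 \<le> inner (w - p) (p - w)" using l by (simp add: zero_le_divide_iff)
  then have "inner (p - w) (p - w) \<le> 0" by (simp add: inner_diff_left inner_diff_right inner_commute)
  then have pw: "p = w" by (meson antisym inner_ge_zero inner_eq_zero_iff eq_iff_diff_eq_0)
  have "q = - D w" unfolding q_def pw using l by (simp add: algebra_simps)
  with q pw show ?thesis by simp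
qed

lemma real_bdd_conv_subseq:
  fixes f :: "nat \<Rightarrow> real"
  assumes "\<And>n. \<bar>f n\<bar> \<le> B"
  shows "\<exists>r. strict_mono r \<and> convergent (f \<circ> r)"
proof -
  obtain r where r: "strict_mono r" "monoseq (\<lambda>n. f (r n))" using seq_monosub by blast
  have "Bseq (\<lambda>n. f (r n))" using assms by (intro BseqI'[where K = B]) simp
  then have "convergent (\<lambda>n. f (r n))" using r(2) Bseq_monoseq_convergent by blast
  then show ?thesis using r(1) by (auto simp: o_def)
qed

lemma riesz_repr:
  fixes g :: "'a::{real_inner,complete_space} \<Rightarrow> real"
  assumes add: "\<And>x y. g (x + y) = g x + g y" and sc: "\<And>a x. g (a *\<^sub>R x) = a * g x"
    and bnd: "\<And>x. \<bar>g x\<bar> \<le> R * norm x"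
  shows "\<exists>w. \<forall>y. g y = inner w y"
proof (cases "\<forall>y. g y = 0")
  case True
  then show ?thesis by (intro exI[of _ 0]) simp
next
  case False
  then obtain y0 where y0: "g y0 \<noteq> 0" by blast
  have bl: "bounded_linear g"
    by (rule bounded_linear_intro[where K = R]) (use add sc bnd in \<open>auto simp: mult.commute\<close>)
  interpret g: bounded_linear g by (rule bl)
  define N where "N = {y. g y = 0}"
  have "closed N" unfolding N_def
    by (rule closed_Collect_eq) (auto intro: linear_continuous_on bl)
  moreover have "0 \<in> N" unfolding N_def by simp
  moreover have "\<And>u v. u \<in> N \<Longrightarrow> v \<in> N \<Longrightarrow> u + v \<in> N" unfolding N_def by (simp add: g.add)
  moreover have "\<And>a v. v \<in> N \<Longrightarrow> a *\<^sub>R v \<in> N" unfolding N_def by (simp add: g.scaleR)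
  ultimately obtain p where p: "p \<in> N" "\<And>v. v \<in> N \<Longrightarrow> inner (y0 - p) v = 0"
    using proj_subspace[of N y0] by blast
  define e where "e = y0 - p"
  have ge: "g e = g y0" unfolding e_def using p(1) unfolding N_def by (simp add: g.diff)
  have e0: "e \<noteq> 0" using ge y0 by auto
  have ee: "inner e e > 0" using e0 by simp
  have "g y = inner ((g e / inner e e) *\<^sub>R e) y" for y
  proof -
    have "y - (g y / g e) *\<^sub>R e \<in> N" unfolding N_def using ge y0 by (simp add: g.diff g.scaleR)
    then have "inner e (y - (g y / g e) *\<^sub>R e) = 0" using p(2) unfolding e_def by blast
    then have "inner e y = (g y / g e) * inner e e" by (simp add: inner_diff_right)
    then show ?thesis using ee ge y0 by (simp add: field_simps)
  qed
  then show ?thesis by blast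
qed

lemma weak_compact:
  fixes x :: "nat \<Rightarrow> 'a::{real_inner,complete_space}"
  assumes bnd: "\<And>n. norm (x n) \<le> R"
  shows "\<exists>\<sigma> w. strict_mono \<sigma> \<and> (\<forall>y. (\<lambda>n. inner (x (\<sigma> n)) y) \<longlonglongrightarrow> inner w y)"
proof -
  have R0: "R \<ge> 0" using bnd[of 0] norm_ge_zero order_trans by blast
  interpret ss: subseqs "\<lambda>m s. convergent (\<lambda>n. inner (x (s n)) (x m))"
  proof
    fix m and s :: "nat \<Rightarrow> nat" assume s: "strict_mono s"
    have "\<bar>inner (x (s n)) (x m)\<bar> \<le> R * R" for n
    proof -
      have "\<bar>inner (x (s n)) (x m)\<bar> \<le> norm (x (s n)) * norm (x m)" by (rule Cauchy_Schwarz_ineq2)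
      also have "\<dots> \<le> R * R" using bnd R0 by (intro mult_mono) auto
      finally show ?thesis .
    qed
    then obtain r where "strict_mono r" "convergent ((\<lambda>n. inner (x (s n)) (x m)) \<circ> r)"
      using real_bdd_conv_subseq[of "\<lambda>n. inner (x (s n)) (x m)" "R * R"] by blast
    then show "\<exists>r'. strict_mono r' \<and> convergent (\<lambda>n. inner (x ((s \<circ> r') n)) (x m))"
      by (auto simp: o_def)
  qed
  define \<sigma> where "\<sigma> = ss.diagseq"
  have sm: "strict_mono \<sigma>" unfolding \<sigma>_def by (rule ss.subseq_diagseq)
  have convm: "convergent (\<lambda>n. inner (x (\<sigma> n)) (x m))" for m
  proof -
    have "convergent (\<lambda>n. inner (x ((ss.diagseq \<circ> (+) (Suc m)) n)) (x m))"
    proof (rule ss.diagseq_holds)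
      fix r s n assume "strict_mono (r :: nat \<Rightarrow> nat)" "convergent (\<lambda>k. inner (x (s k)) (x n))"
      then show "convergent (\<lambda>k. inner (x ((s \<circ> r) k)) (x n))"
        using convergent_subseq_convergent[of "\<lambda>k. inner (x (s k)) (x n)" r] by (simp add: o_def)
    qed
    then have "convergent (\<lambda>n. inner (x (\<sigma> (n + Suc m))) (x m))" unfolding \<sigma>_def by (simp add: o_def add.commute)
    then show ?thesis using convergent_ignore_initial_segment[of "\<lambda>n. inner (x (\<sigma> n)) (x m)" "Suc m"] by blast
  qed
  define W where "W = {v. convergent (\<lambda>n. inner (x (\<sigma> n)) v)}"
  have W0: "0 \<in> W" unfolding W_def by (simp add: convergent_const)
  have Wadd: "u + v \<in> W" if "u \<in> W" "v \<in> W" for u v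
    using that unfolding W_def by (simp add: inner_add_right convergent_add)
  have Wsc: "a *\<^sub>R v \<in> W" if "v \<in> W" for a v
    using that unfolding W_def by (simp add: convergent_def) (metis tendsto_mult_left)
  have Wcl: "closed W"
    unfolding closed_sequential_limits
  proof (intro allI impI, elim conjE)
    fix s l assume s: "\<forall>n. s n \<in> W" "s \<longlonglongrightarrow> l"
    have "Cauchy (\<lambda>n. inner (x (\<sigma> n)) l)"
    proof (rule metric_CauchyI)
      fix e :: real assume e: "e > 0"
      define d where "d = e / (4 * (R + 1))"
      have d: "d > 0" unfolding d_def using e R0 by simp
      obtain j where j: "norm (s j - l) < d"
        using s(2) d unfolding LIMSEQ_iff by (metis order_refl)
      have "Cauchy (\<lambda>n. inner (x (\<sigma> n)) (s j))" using s(1) unfolding W_def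
        by (simp add: convergent_Cauchy)
      then obtain M where M: "\<And>m n. m \<ge> M \<Longrightarrow> n \<ge> M \<Longrightarrow> dist (inner (x (\<sigma> m)) (s j)) (inner (x (\<sigma> n)) (s j)) < e / 2"
        using e unfolding Cauchy_def by (metis half_gt_zero)
      show "\<exists>M. \<forall>m\<ge>M. \<forall>n\<ge>M. dist (inner (x (\<sigma> m)) l) (inner (x (\<sigma> n)) l) < e"
      proof (intro exI allI impI)
        fix m n assume mn: "M \<le> m" "M \<le> n"
        have split: "inner (x (\<sigma> m)) l - inner (x (\<sigma> n)) l
            = inner (x (\<sigma> m) - x (\<sigma> n)) (l - s j) + (inner (x (\<sigma> m)) (s j) - inner (x (\<sigma> n)) (s j))"
          by (simp add: inner_diff_left inner_diff_right)
        have "\<bar>inner (x (\<sigma> m) - x (\<sigma> n)) (l - s j)\<bar> \<le> norm (x (\<sigma> m) - x (\<sigma> n)) * norm (l - s j)"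
          by (rule Cauchy_Schwarz_ineq2)
        also have "\<dots> \<le> (2 * R) * d"
        proof (rule mult_mono)
          have "norm (x (\<sigma> m) - x (\<sigma> n)) \<le> norm (x (\<sigma> m)) + norm (x (\<sigma> n))" by (rule norm_triangle_ineq4)
          then show "norm (x (\<sigma> m) - x (\<sigma> n)) \<le> 2 * R" using bnd[of "\<sigma> m"] bnd[of "\<sigma> n"] by linarith
          show "norm (l - s j) \<le> d" using j by (simp add: norm_minus_commute)
        qed (use R0 in auto)
        also have "\<dots> < e / 2" unfolding d_def using e R0 by (simp add: field_simps)
        finally have a: "\<bar>inner (x (\<sigma> m) - x (\<sigma> n)) (l - s j)\<bar> < e / 2" .
        have b: "\<bar>inner (x (\<sigma> m)) (s j) - inner (x (\<sigma> n)) (s j)\<bar> < e / 2"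
          using M[OF mn] by (simp add: dist_real_def)
        show "dist (inner (x (\<sigma> m)) l) (inner (x (\<sigma> n)) l) < e"
          unfolding dist_real_def split using a b by linarith
      qed
    qed
    then show "l \<in> W" unfolding W_def by (simp add: Cauchy_convergent_iff)
  qed
  have allW: "y \<in> W" for y
  proof -
    obtain p where p: "p \<in> W" "\<And>v. v \<in> W \<Longrightarrow> inner (y - p) v = 0"
      using proj_subspace[OF Wcl W0 Wadd Wsc, of y] by blast
    have xW: "x (\<sigma> n) \<in> W" for n unfolding W_def using convm[of "\<sigma> n"] by simp
    have "inner (x (\<sigma> n)) y = inner (x (\<sigma> n)) p" for n
      using p(2)[OF xW[of n]] by (simp add: inner_diff_left inner_commute)
    then show ?thesis using p(1) unfolding W_def by simp
  qed
  define g where "g y = lim (\<lambda>n. inner (x (\<sigma> n)) y)" for y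
  have gl: "(\<lambda>n. inner (x (\<sigma> n)) y) \<longlonglongrightarrow> g y" for y
    using allW[of y] unfolding W_def g_def by (simp add: convergent_LIMSEQ_iff)
  have gadd: "g (y1 + y2) = g y1 + g y2" for y1 y2
  proof -
    have "(\<lambda>n. inner (x (\<sigma> n)) (y1 + y2)) \<longlonglongrightarrow> g y1 + g y2"
      unfolding inner_add_right by (intro tendsto_add gl)
    then show ?thesis using gl LIMSEQ_unique by blast
  qed
  have gsc: "g (a *\<^sub>R y) = a * g y" for a y
  proof -
    have "(\<lambda>n. inner (x (\<sigma> n)) (a *\<^sub>R y)) \<longlonglongrightarrow> a * g y"
      unfolding inner_scaleR_right by (intro tendsto_mult gl tendsto_const)
    then show ?thesis using gl LIMSEQ_unique by blast
  qed
  have gb: "\<bar>g y\<bar> \<le> R * norm y" for y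
  proof (rule LIMSEQ_le_const2)
    show "(\<lambda>n. \<bar>inner (x (\<sigma> n)) y\<bar>) \<longlonglongrightarrow> \<bar>g y\<bar>" by (intro tendsto_rabs gl)
    have "\<bar>inner (x (\<sigma> n)) y\<bar> \<le> R * norm y" for n
      using Cauchy_Schwarz_ineq2[of "x (\<sigma> n)" y] bnd[of "\<sigma> n"]
      by (meson mult_right_mono norm_ge_zero order_trans)
    then show "\<exists>N. \<forall>n\<ge>N. \<bar>inner (x (\<sigma> n)) y\<bar> \<le> R * norm y" by blast
  qed
  obtain w where w: "\<And>y. g y = inner w y" using riesz_repr[OF gadd gsc gb] by blast
  show ?thesis using sm gl w by metis
qed

locale spos =
  fixes S :: "'a::{real_inner,complete_space} \<Rightarrow> 'a"
  assumes sp: "strongly_pos_sa S"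
begin

lemma bl: "bounded_linear S" using sp unfolding strongly_pos_sa_def by simp

sublocale S: bounded_linear S by (rule bl)

lemma sym_all: "\<forall>x y. inner (S x) y = inner x (S y)"
  using sp unfolding strongly_pos_sa_def by (rule conjunct1[OF conjunct2])
lemma sym: "inner (S x) y = inner x (S y)" by (rule sym_all[rule_format])

lemma ex_m: "\<exists>m>0. \<forall>x. m * (norm x)\<^sup>2 \<le> inner (S x) x"
  using sp unfolding strongly_pos_sa_def by (rule conjunct2[OF conjunct2])

lemma inj_S: "inj S"
proof (rule injI)
  fix x y assume "S x = S y"
  then have "S (x - y) = 0" by (simp add: S.diff)
  obtain m where m: "m > 0" "\<And>x. m * (norm x)\<^sup>2 \<le> inner (S x) x" using ex_m by blast
  from m(2)[of "x - y"] \<open>S (x - y) = 0\<close> have "m * (norm (x - y))\<^sup>2 \<le> 0" by simp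
  then have "norm (x - y) = 0" using m(1) by (simp add: mult_le_0_iff)
  then show "x = y" by simp
qed

lemma surj_S: "surj S"
proof -
  obtain m where m: "m > 0" "\<And>x. m * (norm x)\<^sup>2 \<le> inner (S x) x" using ex_m by blast
  obtain K0 where K0: "K0 > 0" "\<And>x. norm (S x) \<le> norm x * K0" using S.pos_bounded by blast
  define K where "K = K0 + m"
  have K: "K > 0" "m < K" "\<And>x. norm (S x) \<le> norm x * K"
  proof -
    show "K > 0" "m < K" using K0(1) m(1) unfolding K_def by auto
    fix x :: 'a
    have "norm x * K0 \<le> norm x * K" unfolding K_def using m(1) by (intro mult_left_mono) auto
    then show "norm (S x) \<le> norm x * K" using K0(2)[of x] by linarith
  qed
  define t where "t = m / K\<^sup>2"
  define c2 where "c2 = 1 - m\<^sup>2 / K\<^sup>2"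
  define c where "c = sqrt c2"
  have mK: "m\<^sup>2 < K\<^sup>2" using K m(1) by (intro power_strict_mono) auto
  then have mK': "m\<^sup>2 / K\<^sup>2 < 1" using K(1) by simp
  have mK0: "0 < m\<^sup>2 / K\<^sup>2" using K m(1) by simp
  have c2: "0 \<le> c2" "c2 < 1" unfolding c2_def using mK' mK0 by auto
  have c: "0 \<le> c" "c < 1" unfolding c_def using c2 by auto
  have csq: "c\<^sup>2 = c2" unfolding c_def using c2 by simp
  have t: "t > 0" unfolding t_def using m K by simp
  have tm: "2 * t * m = 2 * (m\<^sup>2 / K\<^sup>2)" unfolding t_def by (simp add: power2_eq_square)
  have tK: "t\<^sup>2 * K\<^sup>2 = m\<^sup>2 / K\<^sup>2" unfolding t_def using K(1) by (simp add: power2_eq_square field_simps)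
  { fix y :: 'a
    define f where "f x = x - t *\<^sub>R (S x - y)" for x
    have "\<exists>!x. f x = x"
    proof (rule banach_fix_type[OF c])
      show "\<forall>x z. dist (f x) (f z) \<le> c * dist x z"
      proof (intro allI)
        fix x z :: 'a
        define d where "d = x - z"
        have fd: "f x - f z = d + (- t) *\<^sub>R S d" unfolding f_def d_def by (simp add: S.diff algebra_simps)
        have "(norm (d + (- t) *\<^sub>R S d))\<^sup>2 = (norm d)\<^sup>2 + 2 * (- t) * inner d (S d) + (- t)\<^sup>2 * (norm (S d))\<^sup>2"
          by (rule norm_add_scaled_sq)
        also have "\<dots> = (norm d)\<^sup>2 - 2 * t * inner (S d) d + t\<^sup>2 * (norm (S d))\<^sup>2"
          by (simp add: inner_commute)
        also have "\<dots> \<le> (norm d)\<^sup>2 - 2 * t * (m * (norm d)\<^sup>2) + t\<^sup>2 * (K\<^sup>2 * (norm d)\<^sup>2)"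
        proof -
          have "t * (m * (norm d)\<^sup>2) \<le> t * inner (S d) d" using m(2)[of d] t by simp
          moreover have "(norm (S d))\<^sup>2 \<le> K\<^sup>2 * (norm d)\<^sup>2"
          proof -
            have "norm (S d) \<le> K * norm d" using K(3)[of d] by (simp add: mult.commute)
            then have "(norm (S d))\<^sup>2 \<le> (K * norm d)\<^sup>2" by (rule power_mono) simp
            then show ?thesis by (simp add: power_mult_distrib)
          qed
          then have "t\<^sup>2 * (norm (S d))\<^sup>2 \<le> t\<^sup>2 * (K\<^sup>2 * (norm d)\<^sup>2)" by (simp add: mult_left_mono)
          ultimately show ?thesis by linarith
        qed
        also have "\<dots> = (norm d)\<^sup>2 - (2 * t * m) * (norm d)\<^sup>2 + (t\<^sup>2 * K\<^sup>2) * (norm d)\<^sup>2"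
          by (simp add: algebra_simps)
        also have "\<dots> = c2 * (norm d)\<^sup>2" unfolding tm tK c2_def by (simp add: algebra_simps)
        finally have X: "(norm (d + (- t) *\<^sub>R S d))\<^sup>2 \<le> c2 * (norm d)\<^sup>2" .
        have eq: "(c * norm d)\<^sup>2 = c2 * (norm d)\<^sup>2" by (simp only: power_mult_distrib csq)
        have "(norm (d + (- t) *\<^sub>R S d))\<^sup>2 \<le> (c * norm d)\<^sup>2" using ord_le_eq_trans[OF X eq[symmetric]] .
        then have "norm (d + (- t) *\<^sub>R S d) \<le> c * norm d"
          by (rule power2_le_imp_le) (use c in simp)
        then show "dist (f x) (f z) \<le> c * dist x z" unfolding dist_norm fd d_def .
      qed
    qed
    then obtain x :: 'a where "f x = x" by blast
    then have "t *\<^sub>R (S x - y) = 0" unfolding f_def by simp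
    then have "S x = y" using t by simp
    then have "y \<in> range S" by blast }
  then show ?thesis by blast
qed

lemma S_inv [simp]: "S (inv S y) = y" using surj_S by (simp add: surj_f_inv_f)
lemma inv_S [simp]: "inv S (S x) = x" using inj_S by (simp add: inv_f_f)

lemma inv_add: "inv S (a + b) = inv S a + inv S b"
proof -
  have "inv S (a + b) = inv S (S (inv S a + inv S b))" by (simp add: S.add)
  then show ?thesis by simp
qed
lemma inv_diff: "inv S (a - b) = inv S a - inv S b"
proof -
  have "inv S (a - b) = inv S (S (inv S a - inv S b))" by (simp add: S.diff)
  then show ?thesis by simp
qed
lemma inv_scaleR: "inv S (c *\<^sub>R a) = c *\<^sub>R inv S a"
proof -
  have "inv S (c *\<^sub>R a) = inv S (S (c *\<^sub>R inv S a))" by (simp add: S.scaleR)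
  then show ?thesis by simp
qed

lemma inv_sym: "inner (inv S a) b = inner a (inv S b)"
proof -
  have "inner (inv S a) b = inner (inv S a) (S (inv S b))" by simp
  also have "\<dots> = inner (S (inv S a)) (inv S b)" by (rule sym[symmetric])
  also have "\<dots> = inner a (inv S b)" by simp
  finally show ?thesis .
qed

definition QS where "QS v = inner (S v) v"
definition QI where "QI u = inner (inv S u) u"

lemma QS_ge: "\<exists>m>0. \<forall>v. m * (norm v)\<^sup>2 \<le> QS v" unfolding QS_def using ex_m .
lemma QS_nonneg: "0 \<le> QS v"
proof -
  obtain m where "m > 0" "\<And>v. m * (norm v)\<^sup>2 \<le> QS v" using QS_ge by blast
  have "0 \<le> m * (norm v)\<^sup>2" using \<open>m > 0\<close> by simp
  then show ?thesis using \<open>\<And>v. m * (norm v)\<^sup>2 \<le> QS v\<close>[of v] by linarith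
qed
lemma QI_QS: "QI u = QS (inv S u)" unfolding QI_def QS_def by (simp add: inner_commute)
lemma QI_nonneg: "0 \<le> QI u" unfolding QI_QS by (rule QS_nonneg)

lemma nS_sq: "(normS S v)\<^sup>2 = QS v"
proof -
  have "0 \<le> inner (S v) v" using QS_nonneg[of v] by (simp add: QS_def)
  then show ?thesis by (simp add: normS_def QS_def)
qed
lemma nI_sq: "(normS (inv S) u)\<^sup>2 = QI u"
proof -
  have "0 \<le> inner (inv S u) u" using QI_nonneg[of u] by (simp add: QI_def)
  then show ?thesis by (simp add: normS_def QI_def)
qed
lemma nS_nonneg: "0 \<le> normS S v" using QS_nonneg[of v] by (simp add: normS_def QS_def)
lemma nI_nonneg: "0 \<le> normS (inv S) v" using QI_nonneg[of v] by (simp add: normS_def QI_def)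

lemma QS_zero_iff: "QS v = 0 \<longleftrightarrow> v = 0"
proof
  assume "QS v = 0"
  obtain m where m: "m > 0" "\<And>v. m * (norm v)\<^sup>2 \<le> QS v" using QS_ge by blast
  from m(2)[of v] \<open>QS v = 0\<close> have "m * (norm v)\<^sup>2 \<le> 0" by simp
  then show "v = 0" using m(1) by (simp add: mult_le_0_iff)
qed (simp add: QS_def)

lemma QS_diff: "QS (a - b) = QS a - 2 * inner (S a) b + QS b"
proof -
  have h1: "inner (S b) a = inner (S a) b" by (simp only: sym[of b a] inner_commute[of b "S a"])
  have h2: "inner (S a) (a - b) = inner (S a) a - inner (S a) b" by (rule inner_diff_right)
  have h3: "inner (S b) (a - b) = inner (S a) b - inner (S b) b" using h1 by (simp add: inner_diff_right)
  show ?thesis unfolding QS_def S.diff inner_diff_left h2 h3 by simp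
qed

lemma QS_scale: "QS (c *\<^sub>R v) = c\<^sup>2 * QS v"
  unfolding QS_def by (simp add: S.scaleR power2_eq_square)

lemma polar: "2 * inner (S (p - q)) r = QS p - QS q - QS (p - r) + QS (q - r)"
  unfolding QS_diff by (simp add: S.diff inner_diff_left)

lemma CS_S: "(inner (S a) v)\<^sup>2 \<le> QS a * QS v"
proof (cases "v = 0")
  case True then show ?thesis by (simp add: QS_def)
next
  case False
  then have v: "QS v > 0" using QS_nonneg[of v] QS_zero_iff[of v] by linarith
  define r where "r = inner (S a) v / QS v"
  have "0 \<le> QS (a - r *\<^sub>R v)" by (rule QS_nonneg)
  also have "\<dots> = QS a - 2 * r * inner (S a) v + r\<^sup>2 * QS v"
    unfolding QS_diff QS_scale by (simp add: S.scaleR)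
  also have "\<dots> = QS a - (inner (S a) v)\<^sup>2 / QS v"
    unfolding r_def using v by (simp add: field_simps power2_eq_square)
  finally show ?thesis using v by (simp add: field_simps)
qed

lemma CS: "\<bar>inner u v\<bar> \<le> normS (inv S) u * normS S v"
proof -
  define a where "a = inv S u"
  have u: "u = S a" unfolding a_def by simp
  have "(inner u v)\<^sup>2 \<le> QI u * QS v" unfolding u QI_QS a_def[symmetric] using CS_S[of a v] by (simp add: a_def)
  also have "\<dots> = (normS (inv S) u * normS S v)\<^sup>2" by (simp add: power_mult_distrib nS_sq nI_sq)
  finally have "(inner u v)\<^sup>2 \<le> (normS (inv S) u * normS S v)\<^sup>2" .
  then have "\<bar>inner u v\<bar>\<^sup>2 \<le> (normS (inv S) u * normS S v)\<^sup>2" by (simp only: power2_abs)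
  then show ?thesis by (rule power2_le_imp_le) (intro mult_nonneg_nonneg nI_nonneg nS_nonneg)
qed

lemma QS_inv: "QS (inv S u) = QI u" by (simp add: QI_QS)

lemma norm_le_nS: "\<exists>C>0. \<forall>v. norm v \<le> C * normS S v"
proof -
  obtain m where m: "m > 0" "\<And>v. m * (norm v)\<^sup>2 \<le> QS v" using QS_ge by blast
  have "norm v \<le> (1 / sqrt m) * normS S v" for v
  proof -
    have "(norm v)\<^sup>2 \<le> QS v / m" using m by (simp add: field_simps mult.commute)
    then have "norm v \<le> sqrt (QS v / m)" by (simp add: real_le_rsqrt)
    also have "\<dots> = (1 / sqrt m) * normS S v" unfolding normS_def QS_def by (simp add: real_sqrt_divide)
    finally show ?thesis .
  qed
  then show ?thesis using m(1) by (intro exI[of _ "1 / sqrt m"]) auto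
qed

lemma nS_le_norm: "\<exists>C>0. \<forall>v. normS S v \<le> C * norm v"
proof -
  obtain K where K: "K > 0" "\<And>x. norm (S x) \<le> norm x * K" using S.pos_bounded by blast
  have "normS S v \<le> sqrt K * norm v" for v
  proof -
    have "QS v \<le> norm (S v) * norm v" unfolding QS_def by (rule norm_cauchy_schwarz)
    also have "\<dots> \<le> (norm v * K) * norm v" using K(2)[of v] by (simp add: mult_right_mono)
    also have "(norm v * K) * norm v = (sqrt K * norm v)\<^sup>2" using K(1) by (simp add: power_mult_distrib power2_eq_square)
    finally have "QS v \<le> (sqrt K * norm v)\<^sup>2" .
    then show ?thesis unfolding normS_def QS_def[symmetric] using K(1)
      by (simp add: real_sqrt_le_iff real_le_lsqrt)
  qed
  then show ?thesis using K(1) by (intro exI[of _ "sqrt K"]) auto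
qed

lemma norm_le_nI: "\<exists>C>0. \<forall>u. norm u \<le> C * normS (inv S) u"
proof -
  obtain C where C: "C > 0" "\<And>v. normS S v \<le> C * norm v" using nS_le_norm by blast
  obtain K where K: "K > 0" "\<And>x. norm (S x) \<le> norm x * K" using S.pos_bounded by blast
  obtain c where c: "c > 0" "\<And>v. norm v \<le> c * normS S v" using norm_le_nS by blast
  have "norm u \<le> (K * c) * normS (inv S) u" for u
  proof -
    have "norm u = norm (S (inv S u))" by simp
    also have "\<dots> \<le> norm (inv S u) * K" by (rule K(2))
    also have "\<dots> \<le> (c * normS S (inv S u)) * K" using c(2) K(1) by (simp add: mult_right_mono)
    also have "normS S (inv S u) = normS (inv S) u"
      by (simp only: normS_def QS_def[symmetric] QI_def[symmetric] QS_inv)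
    also have "(c * normS (inv S) u) * K = (K * c) * normS (inv S) u" by (metis mult.commute mult.assoc)
    finally show ?thesis .
  qed
  moreover have "K * c > 0" using K(1) c(1) by simp
  ultimately show ?thesis by blast
qed

end

context spos begin

lemma QS_minus: "QS (- v) = QS v" using QS_diff[of 0 v] by (simp add: QS_def S.zero)
lemma nS_commute: "normS S (a - b) = normS S (b - a)"
  unfolding normS_def QS_def[symmetric] using QS_minus[of "a - b"] by simp

lemma nS_sqrt: "normS S v = sqrt (QS v)" unfolding normS_def QS_def ..

lemma energy_step:
  fixes A :: "'a \<Rightarrow> 'a set" and B C M :: "'a \<Rightarrow> 'a"
  assumes mA: "monotone_op A"
    and Bm: "monotone_fun B" and mu: "\<mu> \<ge> 0" and Bl: "lipschitz_wrt S \<mu> B"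
    and beta: "\<beta> > 0" and Cc: "cocoercive_wrt S \<beta> C"
    and z: "- B z - C z \<in> A z"
    and g: "g > 0" and L0: "0 \<le> L0" and L1: "0 \<le> L1"
    and Nl: "lipschitz_wrt S L1 (\<lambda>v. g *\<^sub>R M v - S v)"
    and yk: "M xk - (B xk + C xk) + (1/g) *\<^sub>R uk \<in> (\<lambda>a. M yk + a) ` A yk"
    and xk1: "xk1 = yk - g *\<^sub>R inv S (B yk) + g *\<^sub>R inv S (B xk)"
    and uk1: "uk1 = (g *\<^sub>R M yk - S yk) - (g *\<^sub>R M xk - S xk)"
    and ub: "normS (inv S) uk \<le> L0 * t0" and t0: "0 \<le> t0"
  shows "QS (xk1 - z) + 2 * inner uk1 (xk1 - z) + L1 * (normS S (xk - yk))\<^sup>2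
        \<le> QS (xk - z) + 2 * inner uk (xk - z) + L0 * t0\<^sup>2
          - (1 - L0 - L1 - 2 * g * L1 * \<mu> - g\<^sup>2 * \<mu>\<^sup>2 - g * \<beta> / 2) * (normS S (xk - yk))\<^sup>2"
proof -
  define a where "a = xk - yk"
  define e where "e = xk1 - yk"
  define ta where "ta = normS S a"
  define c where "c = C xk - C z"
  define bb where "bb = B xk - B yk"
  define s where "s = normS (inv S) c"
  have ta0: "0 \<le> ta" unfolding ta_def by (rule nS_nonneg)
  have s0: "0 \<le> s" unfolding s_def by (rule nI_nonneg)
  have Qa: "QS a = ta\<^sup>2" unfolding ta_def nS_sq ..
  obtain \<alpha> where al: "\<alpha> \<in> A yk" "M xk - (B xk + C xk) + (1/g) *\<^sub>R uk = M yk + \<alpha>" using yk by auto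
  have mono1: "0 \<le> inner (\<alpha> - (- B z - C z)) (yk - z)" using mA al(1) z unfolding monotone_op_def by blast
  have F1: "g *\<^sub>R M xk - g *\<^sub>R M yk = S xk - S yk - uk1" unfolding uk1 by (simp add: algebra_simps)
  have F2: "S xk1 = S yk - g *\<^sub>R B yk + g *\<^sub>R B xk" unfolding xk1 by (simp add: S.diff S.add S.scaleR)
  have galpha: "g *\<^sub>R \<alpha> = g *\<^sub>R M xk - g *\<^sub>R M yk - g *\<^sub>R B xk - g *\<^sub>R C xk + uk"
  proof -
    have eqa: "\<alpha> = M xk - (B xk + C xk) + (1/g) *\<^sub>R uk - M yk" using al(2) by (simp add: algebra_simps)
    have "g *\<^sub>R \<alpha> = g *\<^sub>R (M xk - (B xk + C xk) + (1/g) *\<^sub>R uk - M yk)" unfolding eqa ..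
    also have "\<dots> = g *\<^sub>R M xk - (g *\<^sub>R B xk + g *\<^sub>R C xk) + g *\<^sub>R ((1/g) *\<^sub>R uk) - g *\<^sub>R M yk"
      by (simp only: scaleR_diff_right scaleR_add_right)
    also have "g *\<^sub>R ((1/g) *\<^sub>R uk) = uk" using g by simp
    also have "g *\<^sub>R M xk - (g *\<^sub>R B xk + g *\<^sub>R C xk) + uk - g *\<^sub>R M yk
        = g *\<^sub>R M xk - g *\<^sub>R M yk - g *\<^sub>R B xk - g *\<^sub>R C xk + uk" by (simp add: algebra_simps)
    finally show ?thesis .
  qed
  have galpha': "g *\<^sub>R \<alpha> = S xk - S yk - uk1 - g *\<^sub>R B xk - g *\<^sub>R C xk + uk"
    using galpha unfolding F1 .
  have vec: "g *\<^sub>R (\<alpha> - (- B z - C z)) = S (xk - xk1) - g *\<^sub>R (B yk - B z) - g *\<^sub>R c - uk1 + uk"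
  proof -
    have "g *\<^sub>R (\<alpha> - (- B z - C z)) = g *\<^sub>R \<alpha> + g *\<^sub>R B z + g *\<^sub>R C z" by (simp add: algebra_simps)
    also have "\<dots> = S xk - S yk - uk1 - g *\<^sub>R B xk - g *\<^sub>R C xk + uk + g *\<^sub>R B z + g *\<^sub>R C z"
      unfolding galpha' ..
    also have "\<dots> = S (xk - xk1) - g *\<^sub>R (B yk - B z) - g *\<^sub>R c - uk1 + uk"
      unfolding S.diff F2 c_def by (simp add: algebra_simps)
    finally show ?thesis .
  qed
  define X where "X = inner (S (xk - xk1)) (yk - z)"
  define ic where "ic = inner c (yk - z)"
  define iu1 where "iu1 = inner uk1 (yk - z)"
  define iu0 where "iu0 = inner uk (yk - z)"
  define ib where "ib = inner (B yk - B z) (yk - z)"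
  have I1: "0 \<le> X - g * ib - g * ic - iu1 + iu0"
  proof -
    have "0 \<le> g * inner (\<alpha> - (- B z - C z)) (yk - z)" using mono1 g by simp
    also have "\<dots> = inner (g *\<^sub>R (\<alpha> - (- B z - C z))) (yk - z)" by simp
    also have "\<dots> = X - g * ib - g * ic - iu1 + iu0"
      unfolding vec X_def ib_def ic_def iu1_def iu0_def by (simp add: inner_diff_left inner_add_left)
    finally show ?thesis .
  qed
  have ib0: "0 \<le> g * ib" using Bm g unfolding monotone_fun_def ib_def by simp
  have E1: "2 * X = QS (xk - z) - QS (xk1 - z) - ta\<^sup>2 + QS e"
  proof -
    have "2 * inner (S ((xk - z) - (xk1 - z))) (yk - z)
        = QS (xk - z) - QS (xk1 - z) - QS ((xk - z) - (yk - z)) + QS ((xk1 - z) - (yk - z))"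
      by (rule polar)
    moreover have "(xk - z) - (xk1 - z) = xk - xk1" "(xk - z) - (yk - z) = a" "(xk1 - z) - (yk - z) = e"
      unfolding a_def e_def by simp_all
    ultimately show ?thesis unfolding X_def Qa[symmetric] by simp
  qed
  define icx where "icx = inner c (xk - z)"
  define ica where "ica = inner c a"
  have ic_split: "ic = icx - ica" unfolding ic_def icx_def ica_def a_def by (simp add: inner_diff_right)
  have icx_ge: "s\<^sup>2 / \<beta> \<le> icx" using Cc unfolding cocoercive_wrt_def icx_def c_def s_def by simp
  have ica_le: "ica \<le> s * ta"
    using CS[of c a] unfolding ica_def s_def ta_def by simp
  have Fc: "2 * (g * ica) - 2 * (g * icx) \<le> g * \<beta> * ta\<^sup>2 / 2"
  proof -
    have a1: "g * icx \<ge> g * (s\<^sup>2 / \<beta>)" using icx_ge g by (intro mult_left_mono) auto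
    have a2: "g * ica \<le> g * (s * ta)" using ica_le g by (intro mult_left_mono) auto
    have sq: "0 \<le> g * (\<beta> / 2) * (ta - 2 * s / \<beta>)\<^sup>2" using g beta by simp
    have id: "g * (\<beta> / 2) * (ta - 2 * s / \<beta>)\<^sup>2 = g * \<beta> * ta\<^sup>2 / 2 - 2 * (g * (s * ta)) + 2 * (g * (s\<^sup>2 / \<beta>))"
      using beta by (simp add: field_simps power2_eq_square)
    show ?thesis using a1 a2 sq id by linarith
  qed
  define iu1x where "iu1x = inner uk1 (xk1 - z)"
  define iu1e where "iu1e = inner uk1 e"
  define iu0x where "iu0x = inner uk (xk - z)"
  define iu0a where "iu0a = inner uk a"
  have iu1_split: "iu1 = iu1x - iu1e" unfolding iu1_def iu1x_def iu1e_def e_def by (simp add: inner_diff_right)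
  have iu0_split: "iu0 = iu0x - iu0a" unfolding iu0_def iu0x_def iu0a_def a_def by (simp add: inner_diff_right)
  have u1b: "normS (inv S) uk1 \<le> L1 * ta"
  proof -
    have "uk1 = (g *\<^sub>R M yk - S yk) - (g *\<^sub>R M xk - S xk)" by (rule uk1)
    then have "normS (inv S) uk1 \<le> L1 * normS S (yk - xk)" using Nl unfolding lipschitz_wrt_def by simp
    then show ?thesis unfolding ta_def a_def using nS_commute[of yk xk] by simp
  qed
  have e_eq: "e = g *\<^sub>R inv S bb" unfolding e_def xk1 bb_def by (simp add: inv_diff inv_scaleR algebra_simps)
  have bbl: "normS (inv S) bb \<le> \<mu> * ta" using Bl unfolding lipschitz_wrt_def bb_def ta_def a_def by simp
  have Qe_eq: "QS e = g\<^sup>2 * (normS (inv S) bb)\<^sup>2" unfolding e_eq QS_scale QS_inv nI_sq ..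
  have Fe: "QS e \<le> g\<^sup>2 * \<mu>\<^sup>2 * ta\<^sup>2"
  proof -
    have "(normS (inv S) bb)\<^sup>2 \<le> (\<mu> * ta)\<^sup>2" using bbl nI_nonneg[of bb] by (intro power_mono) auto
    then have "g\<^sup>2 * (normS (inv S) bb)\<^sup>2 \<le> g\<^sup>2 * (\<mu> * ta)\<^sup>2" by (intro mult_left_mono) auto
    then show ?thesis unfolding Qe_eq by (simp add: power_mult_distrib mult.assoc)
  qed
  have neb: "normS S e \<le> g * \<mu> * ta"
  proof -
    have "(normS S e)\<^sup>2 \<le> (g * \<mu> * ta)\<^sup>2" unfolding nS_sq using Fe by (simp add: power_mult_distrib)
    then show ?thesis by (rule power2_le_imp_le) (use g mu ta0 in simp)
  qed
  have Fu1: "2 * iu1e \<le> 2 * g * L1 * \<mu> * ta\<^sup>2"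
  proof -
    have "iu1e \<le> normS (inv S) uk1 * normS S e" using CS[of uk1 e] unfolding iu1e_def by simp
    also have "\<dots> \<le> (L1 * ta) * (g * \<mu> * ta)"
      using u1b neb nI_nonneg[of uk1] nS_nonneg[of e] L1 ta0 by (intro mult_mono) auto
    finally show ?thesis by (simp add: power2_eq_square algebra_simps)
  qed
  have Fu0: "- 2 * iu0a \<le> L0 * t0\<^sup>2 + L0 * ta\<^sup>2"
  proof -
    have "- iu0a \<le> normS (inv S) uk * normS S a" using CS[of uk a] unfolding iu0a_def by simp
    also have "\<dots> \<le> (L0 * t0) * ta" unfolding ta_def using ub nS_nonneg[of a] by (simp add: mult_right_mono)
    finally have h: "- iu0a \<le> L0 * (t0 * ta)" by (simp add: algebra_simps)
    have "0 \<le> L0 * (t0 - ta)\<^sup>2" using L0 by simp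
    moreover have "L0 * (t0 - ta)\<^sup>2 = L0 * t0\<^sup>2 + L0 * ta\<^sup>2 - 2 * (L0 * (t0 * ta))"
      by (simp add: power2_eq_square algebra_simps)
    ultimately show ?thesis using h by linarith
  qed
  have gic: "g * ic = g * icx - g * ica" unfolding ic_split by (simp add: algebra_simps)
  have main: "QS (xk1 - z) + 2 * iu1x + L1 * ta\<^sup>2 \<le> QS (xk - z) + 2 * iu0x + L0 * t0\<^sup>2
      - ta\<^sup>2 + L0 * ta\<^sup>2 + L1 * ta\<^sup>2 + 2 * g * L1 * \<mu> * ta\<^sup>2 + g\<^sup>2 * \<mu>\<^sup>2 * ta\<^sup>2 + g * \<beta> * ta\<^sup>2 / 2"
    using I1 ib0 E1 Fc Fu1 Fu0 Fe gic iu1_split iu0_split by linarith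
  have rhs: "QS (xk - z) + 2 * iu0x + L0 * t0\<^sup>2
      - ta\<^sup>2 + L0 * ta\<^sup>2 + L1 * ta\<^sup>2 + 2 * g * L1 * \<mu> * ta\<^sup>2 + g\<^sup>2 * \<mu>\<^sup>2 * ta\<^sup>2 + g * \<beta> * ta\<^sup>2 / 2
      = QS (xk - z) + 2 * iu0x + L0 * t0\<^sup>2 - (1 - L0 - L1 - 2 * g * L1 * \<mu> - g\<^sup>2 * \<mu>\<^sup>2 - g * \<beta> / 2) * ta\<^sup>2"
    by (simp add: field_simps)
  show ?thesis using main[unfolded rhs] unfolding iu1x_def iu0x_def ta_def a_def .
qed

end

lemma not_tendsto_subseq:
  fixes f :: "nat \<Rightarrow> real"
  assumes "\<not> f \<longlonglongrightarrow> l"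
  shows "\<exists>e>0. \<exists>r::nat\<Rightarrow>nat. strict_mono r \<and> (\<forall>n. e \<le> \<bar>f (r n) - l\<bar>)"
proof -
  from assms obtain e where e: "e > 0" "\<forall>N. \<exists>n\<ge>N. \<not> \<bar>f n - l\<bar> < e"
    unfolding LIMSEQ_iff real_norm_def by blast
  then have "infinite {n. e \<le> \<bar>f n - l\<bar>}"
    unfolding infinite_nat_iff_unbounded_le by (auto simp: not_less)
  then obtain r :: "nat \<Rightarrow> nat" where r0: "strict_mono r" "\<forall>n. r n \<in> {n. e \<le> \<bar>f n - l\<bar>}"
    using infinite_enumerate by blast
  have r1: "\<forall>n. e \<le> \<bar>f (r n) - l\<bar>" using r0(2) by simp
  show ?thesis using e(1) r0(1) r1 by metis
qed

lemma seq_energy: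
  fixes W t :: "nat \<Rightarrow> real"
  assumes eps: "\<epsilon> > 0" and dec: "\<And>n. W (Suc n) \<le> W n - \<epsilon> * (t (Suc n))\<^sup>2"
    and lb: "\<And>n. 0 \<le> W n"
  shows "(\<lambda>n. (t (Suc n))\<^sup>2) \<longlonglongrightarrow> 0" "convergent W" "\<And>n. W n \<le> W 0"
proof -
  have dec': "W (Suc n) \<le> W n" for n using dec[of n] eps by (smt (verit) mult_nonneg_nonneg zero_le_power2)
  have part: "W n + \<epsilon> * (\<Sum>i<n. (t (Suc i))\<^sup>2) \<le> W 0" for n
  proof (induction n)
    case 0 then show ?case by simp
  next
    case (Suc n)
    have "W (Suc n) + \<epsilon> * (\<Sum>i<Suc n. (t (Suc i))\<^sup>2) = W (Suc n) + \<epsilon> * (t (Suc n))\<^sup>2 + \<epsilon> * (\<Sum>i<n. (t (Suc i))\<^sup>2)"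
      by (simp add: algebra_simps)
    also have "\<dots> \<le> W n + \<epsilon> * (\<Sum>i<n. (t (Suc i))\<^sup>2)" using dec[of n] by linarith
    finally show ?case using Suc.IH by linarith
  qed
  have "(\<Sum>i<n. (t (Suc i))\<^sup>2) \<le> W 0 / \<epsilon>" for n
  proof -
    have "\<epsilon> * (\<Sum>i<n. (t (Suc i))\<^sup>2) \<le> W 0" using part[of n] lb[of n] by linarith
    then show ?thesis using eps by (simp add: field_simps mult.commute)
  qed
  then have "summable (\<lambda>i. (t (Suc i))\<^sup>2)" by (intro summableI_nonneg_bounded) auto
  then show "(\<lambda>n. (t (Suc n))\<^sup>2) \<longlonglongrightarrow> 0" by (rule summable_LIMSEQ_zero)
  have "decseq W" using dec' by (simp add: decseq_SucI)
  then obtain L where "W \<longlonglongrightarrow> L" using decseq_convergent[of W 0] lb by blast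
  then show "convergent W" by (auto simp: convergent_def)
  show "W n \<le> W 0" for n
  proof (induction n)
    case (Suc n) then show ?case using dec'[of n] by linarith
  qed simp
qed

lemma sq_tendsto_zero:
  fixes t :: "nat \<Rightarrow> real"
  assumes "(\<lambda>n. (t n)\<^sup>2) \<longlonglongrightarrow> 0"
  shows "(\<lambda>n. \<bar>t n\<bar>) \<longlonglongrightarrow> 0"
proof -
  have "(\<lambda>n. sqrt ((t n)\<^sup>2)) \<longlonglongrightarrow> sqrt 0" by (intro tendsto_real_sqrt assms)
  then show ?thesis by simp
qed

theorem theorem3p1:
  fixes S :: "'a::{real_inner,complete_space} \<Rightarrow> 'a"
    and A :: "'a \<Rightarrow> 'a set" and B C :: "'a \<Rightarrow> 'a"
    and \<mu> \<beta> \<gamma> \<epsilon> :: real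
    and gam L :: "nat \<Rightarrow> real" and M :: "nat \<Rightarrow> 'a \<Rightarrow> 'a"
    and x0 u0 :: 'a and x y u :: "nat \<Rightarrow> 'a"
  assumes S: "strongly_pos_sa S"
    and A: "maximal_monotone A"
    and B_mono: "monotone_fun B" and mu: "\<mu> \<ge> 0" and B_lip: "lipschitz_wrt S \<mu> B"
    and beta: "\<beta> > 0" and C: "cocoercive_wrt S \<beta> C"
    and zer_ne: "zer3 A B C \<noteq> {}"
    and gamma: "\<gamma> > 0" and gam: "\<And>k. gam k \<ge> \<gamma>"
    and Lk: "\<And>k. 0 \<le> L k \<and> L k < 1"
    and M: "\<And>k. lipschitz_wrt S (L k) (\<lambda>z. gam k *\<^sub>R M k z - S z)"
    and eps: "\<epsilon> > 0"
    and step: "\<And>k. k \<ge> 1 \<Longrightarrow>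
        1 - L (k - 1) - L k - 2 * gam k * L k * \<mu> - (gam k)\<^sup>2 * \<mu>\<^sup>2 - gam k * \<beta> / 2 \<ge> \<epsilon>"
    and init: "x 0 = x0" "u 0 = u0"
    and y_def: "\<And>k. M k (x k) - (B (x k) + C (x k)) + (1 / gam k) *\<^sub>R u k
                     \<in> (\<lambda>a. M k (y k) + a) ` A (y k)"
    and x_def: "\<And>k. x (Suc k) = y k - gam k *\<^sub>R inv S (B (y k)) + gam k *\<^sub>R inv S (B (x k))"
    and u_def: "\<And>k. u (Suc k) = (gam k *\<^sub>R M k (y k) - S (y k)) - (gam k *\<^sub>R M k (x k) - S (x k))"
  shows "\<exists>z \<in> zer3 A B C. weakly_converges x z"
proof -
  interpret spos S by (rule spos.intro) (rule S)
  define F where "F = zer3 A B C"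
  have mA: "monotone_op A" using A unfolding maximal_monotone_def by simp
  have zA: "- B z - C z \<in> A z" if "z \<in> F" for z
  proof -
    from that obtain a where a: "a \<in> A z" "0 = a + B z + C z" unfolding F_def zer3_def by auto
    then have "a = - B z - C z" by (simp add: algebra_simps eq_neg_iff_add_eq_0)
    with a(1) show ?thesis by simp
  qed
  have g0: "gam k > 0" for k using gam[of k] gamma by linarith
  have L0: "0 \<le> L k" for k using Lk[of k] by simp
  have L1: "L k < 1" for k using Lk[of k] by simp
  have eps_step: "\<epsilon> \<le> 1 - L n - L (Suc n) - 2 * gam (Suc n) * L (Suc n) * \<mu> - (gam (Suc n))\<^sup>2 * \<mu>\<^sup>2 - gam (Suc n) * \<beta> / 2" for n
    using step[of "Suc n"] by simp
  have Lge: "\<epsilon> \<le> 1 - L n" for n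
  proof -
    have "0 \<le> L (Suc n)" by (rule L0)
    moreover have "0 \<le> 2 * gam (Suc n) * L (Suc n) * \<mu>" using g0[of "Suc n"] L0[of "Suc n"] mu by simp
    moreover have "0 \<le> (gam (Suc n))\<^sup>2 * \<mu>\<^sup>2" by simp
    moreover have "0 \<le> gam (Suc n) * \<beta> / 2" using g0[of "Suc n"] beta by simp
    ultimately show ?thesis using eps_step[of n] by linarith
  qed
  define ta where "ta n = normS S (x n - y n)" for n
  have ta0: "0 \<le> ta n" for n unfolding ta_def by (rule nS_nonneg)
  have ub: "normS (inv S) (u (Suc n)) \<le> L n * ta n" for n
  proof -
    have "normS (inv S) ((gam n *\<^sub>R M n (y n) - S (y n)) - (gam n *\<^sub>R M n (x n) - S (x n))) \<le> L n * normS S (y n - x n)"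
      using M[of n] unfolding lipschitz_wrt_def by blast
    then show ?thesis unfolding u_def ta_def using nS_commute[of "y n" "x n"] by simp
  qed
  define W where "W z n = QS (x (Suc n) - z) + 2 * inner (u (Suc n)) (x (Suc n) - z) + L n * (ta n)\<^sup>2" for z n
  have Wstep: "W z (Suc n) \<le> W z n - \<epsilon> * (ta (Suc n))\<^sup>2" if z: "z \<in> F" for z n
  proof -
    have es: "QS (x (Suc (Suc n)) - z) + 2 * inner (u (Suc (Suc n))) (x (Suc (Suc n)) - z) + L (Suc n) * (normS S (x (Suc n) - y (Suc n)))\<^sup>2
        \<le> QS (x (Suc n) - z) + 2 * inner (u (Suc n)) (x (Suc n) - z) + L n * (ta n)\<^sup>2
          - (1 - L n - L (Suc n) - 2 * gam (Suc n) * L (Suc n) * \<mu> - (gam (Suc n))\<^sup>2 * \<mu>\<^sup>2 - gam (Suc n) * \<beta> / 2) * (normS S (x (Suc n) - y (Suc n)))\<^sup>2"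
      by (rule energy_step[OF mA B_mono mu B_lip beta C zA[OF z] g0 L0 L0 M y_def x_def u_def ub ta0])
    have "\<epsilon> * (ta (Suc n))\<^sup>2 \<le> (1 - L n - L (Suc n) - 2 * gam (Suc n) * L (Suc n) * \<mu> - (gam (Suc n))\<^sup>2 * \<mu>\<^sup>2 - gam (Suc n) * \<beta> / 2) * (ta (Suc n))\<^sup>2"
      using eps_step[of n] by (intro mult_right_mono) auto
    then show ?thesis using es unfolding W_def ta_def by linarith
  qed
  have Wlb: "(1 - L n) * QS (x (Suc n) - z) \<le> W z n" for z n
  proof -
    define r where "r = normS S (x (Suc n) - z)"
    have r0: "0 \<le> r" unfolding r_def by (rule nS_nonneg)
    have rq: "r\<^sup>2 = QS (x (Suc n) - z)" unfolding r_def nS_sq ..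
    have "- inner (u (Suc n)) (x (Suc n) - z) \<le> normS (inv S) (u (Suc n)) * r"
      using CS[of "u (Suc n)" "x (Suc n) - z"] unfolding r_def by simp
    also have "\<dots> \<le> (L n * ta n) * r" using ub[of n] r0 by (rule mult_right_mono)
    finally have h: "- inner (u (Suc n)) (x (Suc n) - z) \<le> L n * (ta n * r)" by (simp add: algebra_simps)
    have "0 \<le> L n * (ta n - r)\<^sup>2" using L0[of n] by simp
    moreover have "L n * (ta n - r)\<^sup>2 = L n * (ta n)\<^sup>2 + L n * r\<^sup>2 - 2 * (L n * (ta n * r))"
      by (simp add: power2_eq_square algebra_simps)
    moreover have "(1 - L n) * QS (x (Suc n) - z) = QS (x (Suc n) - z) - L n * r\<^sup>2" unfolding rq by (simp add: algebra_simps)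
    ultimately show ?thesis using h unfolding W_def by linarith
  qed
  have QSn: "0 \<le> QS v" for v by (rule QS_nonneg)
  have Wge: "\<epsilon> * QS (x (Suc n) - z) \<le> W z n" for z n
    using Wlb[of n z] mult_right_mono[OF Lge[of n] QSn[of "x (Suc n) - z"]] by linarith
  have W0: "0 \<le> W z n" for z n using Wge[of n z] eps QSn[of "x (Suc n) - z"] by (smt (verit) mult_nonneg_nonneg)
  obtain z0 where z0: "z0 \<in> F" using zer_ne unfolding F_def by blast
  have taS: "(\<lambda>n. (ta (Suc n))\<^sup>2) \<longlonglongrightarrow> 0" using seq_energy(1)[of \<epsilon> "W z0" ta, OF eps Wstep[OF z0] W0] .
  have ta_lim: "ta \<longlonglongrightarrow> 0"
  proof -
    have "(\<lambda>n. \<bar>ta (Suc n)\<bar>) \<longlonglongrightarrow> 0" using sq_tendsto_zero[OF taS] .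
    then have "(\<lambda>n. ta (Suc n)) \<longlonglongrightarrow> 0" using ta0 by simp
    then show ?thesis by (rule LIMSEQ_imp_Suc)
  qed
  have Wb: "QS (x (Suc n) - z) \<le> W z 0 / \<epsilon>" if z: "z \<in> F" for z n
  proof -
    have "\<epsilon> * QS (x (Suc n) - z) \<le> W z 0" using Wge[of n z] seq_energy(3)[of \<epsilon> "W z" ta n, OF eps Wstep[OF z] W0] by linarith
    then show ?thesis using eps by (simp add: field_simps mult.commute)
  qed
  have Wconv: "convergent (W z)" if z: "z \<in> F" for z
    using seq_energy(2)[of \<epsilon> "W z" ta, OF eps Wstep[OF z] W0] .
  obtain cS where cS: "cS > 0" "\<And>v. norm v \<le> cS * normS S v" using norm_le_nS by blast
  obtain cI where cI: "cI > 0" "\<And>v. norm v \<le> cI * normS (inv S) v" using norm_le_nI by blast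
  obtain dS where dS: "dS > 0" "\<And>v. normS S v \<le> dS * norm v" using nS_le_norm by blast
  obtain KS where KS: "KS > 0" "\<And>v. norm (S v) \<le> norm v * KS" using S.pos_bounded by blast
  have Lt_le: "L n * t \<le> t" if "0 \<le> t" for n t
    using mult_left_le_one_le[of t "L n"] L0[of n] L1[of n] that by simp
  define Rz where "Rz z = sqrt (W z 0 / \<epsilon>)" for z
  have nSx: "normS S (x (Suc n) - z) \<le> Rz z" if z: "z \<in> F" for z n
    unfolding nS_sqrt Rz_def using Wb[OF z, of n] by simp
  have inner_lim: "(\<lambda>n. inner (u (Suc n)) (x (Suc n) - z)) \<longlonglongrightarrow> 0" if z: "z \<in> F" for z
  proof (rule Lim_null_comparison)
    show "(\<lambda>n. ta n * Rz z) \<longlonglongrightarrow> 0" using ta_lim by (simp add: tendsto_mult_left_zero)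
    show "\<forall>\<^sub>F n in sequentially. norm (inner (u (Suc n)) (x (Suc n) - z)) \<le> ta n * Rz z"
    proof (intro always_eventually allI)
      fix n
      have "\<bar>inner (u (Suc n)) (x (Suc n) - z)\<bar> \<le> normS (inv S) (u (Suc n)) * normS S (x (Suc n) - z)" by (rule CS)
      also have "\<dots> \<le> (L n * ta n) * Rz z"
        using ub[of n] nSx[OF z, of n] nI_nonneg[of "u (Suc n)"] nS_nonneg[of "x (Suc n) - z"] L0[of n] ta0[of n]
        by (intro mult_mono) auto
      also have "\<dots> \<le> ta n * Rz z"
      proof -
        have "0 \<le> Rz z" using nSx[OF z, of 0] nS_nonneg[of "x (Suc 0) - z"] by linarith
        moreover have "L n * ta n \<le> ta n" by (rule Lt_le[OF ta0])
        ultimately show ?thesis by (intro mult_right_mono) auto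
      qed
      finally show "norm (inner (u (Suc n)) (x (Suc n) - z)) \<le> ta n * Rz z" by simp
    qed
  qed
  have Lta: "(\<lambda>n. L n * (ta n)\<^sup>2) \<longlonglongrightarrow> 0"
  proof (rule Lim_null_comparison)
    show "(\<lambda>n. (ta n)\<^sup>2) \<longlonglongrightarrow> 0" using tendsto_power[OF ta_lim, of 2] by simp
    show "\<forall>\<^sub>F n in sequentially. norm (L n * (ta n)\<^sup>2) \<le> (ta n)\<^sup>2"
    proof (intro always_eventually allI)
      fix n
      have "0 \<le> L n * (ta n)\<^sup>2" using L0[of n] by simp
      then show "norm (L n * (ta n)\<^sup>2) \<le> (ta n)\<^sup>2" using Lt_le[of "(ta n)\<^sup>2" n] by simp
    qed
  qed
  have QSconv: "convergent (\<lambda>n. QS (x n - z))" if z: "z \<in> F" for z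
  proof -
    have e: "QS (x (Suc n) - z) = W z n - 2 * inner (u (Suc n)) (x (Suc n) - z) - L n * (ta n)\<^sup>2" for n
      unfolding W_def by simp
    have "(\<lambda>n. W z n - 2 * inner (u (Suc n)) (x (Suc n) - z) - L n * (ta n)\<^sup>2) \<longlonglongrightarrow> lim (W z) - 2 * 0 - 0"
      using Wconv[OF z] inner_lim[OF z] Lta by (intro tendsto_intros) (simp_all add: convergent_LIMSEQ_iff)
    then have "convergent (\<lambda>n. QS (x (n + 1) - z))" unfolding e[symmetric] Suc_eq_plus1[symmetric]
      by (auto simp: convergent_def)
    then show ?thesis using convergent_ignore_initial_segment[of "\<lambda>n. QS (x n - z)" 1] by simp
  qed
  define Rx where "Rx = max (norm (x 0)) (norm z0 + cS * Rz z0)"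
  have xb: "norm (x n) \<le> Rx" for n
  proof (cases n)
    case 0 then show ?thesis unfolding Rx_def by simp
  next
    case (Suc m)
    have "norm (x (Suc m) - z0) \<le> cS * normS S (x (Suc m) - z0)" by (rule cS(2))
    also have "\<dots> \<le> cS * Rz z0" using nSx[OF z0, of m] cS(1) by simp
    finally have "norm (x (Suc m)) \<le> norm z0 + cS * Rz z0" using norm_triangle_sub[of "x (Suc m)" z0] by linarith
    then show ?thesis unfolding Rx_def Suc by simp
  qed
  have a_lim: "(\<lambda>n. norm (x n - y n)) \<longlonglongrightarrow> 0"
  proof (rule Lim_null_comparison)
    show "(\<lambda>n. cS * ta n) \<longlonglongrightarrow> 0" using ta_lim by (simp add: tendsto_mult_right_zero)
    show "\<forall>\<^sub>F n in sequentially. norm (norm (x n - y n)) \<le> cS * ta n"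
      unfolding ta_def using cS(2) by simp
  qed
  have u_lim: "(\<lambda>n. norm (u n)) \<longlonglongrightarrow> 0"
  proof -
    have "(\<lambda>n. norm (u (Suc n))) \<longlonglongrightarrow> 0"
    proof (rule Lim_null_comparison)
      show "(\<lambda>n. cI * ta n) \<longlonglongrightarrow> 0" using ta_lim by (simp add: tendsto_mult_right_zero)
      show "\<forall>\<^sub>F n in sequentially. norm (norm (u (Suc n))) \<le> cI * ta n"
      proof (intro always_eventually allI)
        fix n
        have "normS (inv S) (u (Suc n)) \<le> ta n" using ub[of n] Lt_le[OF ta0[of n], of n] by linarith
        then show "norm (norm (u (Suc n))) \<le> cI * ta n" using cI(2)[of "u (Suc n)"] cI(1)
          by (smt (verit) mult_left_mono norm_ge_zero real_norm_def)
      qed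
    qed
    then show ?thesis by (rule LIMSEQ_imp_Suc)
  qed
  define D where "D v = B v + C v" for v
  have Bn: "normS (inv S) (B p - B q) \<le> \<mu> * normS S (p - q)" for p q
    using B_lip unfolding lipschitz_wrt_def by blast
  have Cn: "normS (inv S) (C p - C q) \<le> \<beta> * normS S (p - q)" for p q
  proof -
    define s where "s = normS (inv S) (C p - C q)"
    have s0: "0 \<le> s" unfolding s_def by (rule nI_nonneg)
    have "(1 / \<beta>) * s\<^sup>2 \<le> inner (C p - C q) (p - q)" using C unfolding cocoercive_wrt_def s_def by blast
    also have "\<dots> \<le> s * normS S (p - q)" using CS[of "C p - C q" "p - q"] unfolding s_def by simp
    finally have h: "s\<^sup>2 \<le> \<beta> * (s * normS S (p - q))" using beta by (simp add: field_simps)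
    show ?thesis
    proof (cases "s = 0")
      case True then show ?thesis unfolding s_def using beta nS_nonneg[of "p - q"] by simp
    next
      case False
      then have "s > 0" using s0 by simp
      with h have "s * s \<le> s * (\<beta> * normS S (p - q))" by (simp add: power2_eq_square algebra_simps)
      then show ?thesis unfolding s_def[symmetric] using \<open>s > 0\<close> by simp
    qed
  qed
  have Dmono: "0 \<le> inner (D p - D q) (p - q)" for p q
  proof -
    have "0 \<le> inner (B p - B q) (p - q)" using B_mono unfolding monotone_fun_def by blast
    moreover have "0 \<le> inner (C p - C q) (p - q)"
    proof -
      have "(1 / \<beta>) * (normS (inv S) (C p - C q))\<^sup>2 \<le> inner (C p - C q) (p - q)"
        using C unfolding cocoercive_wrt_def by blast
      moreover have "0 \<le> (1 / \<beta>) * (normS (inv S) (C p - C q))\<^sup>2" using beta by simp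
      ultimately show ?thesis by linarith
    qed
    ultimately show ?thesis unfolding D_def by (simp add: inner_diff_left inner_add_left algebra_simps)
  qed
  define KD where "KD = cI * (\<mu> + \<beta>) * dS"
  have DL: "norm (D p - D q) \<le> KD * norm (p - q)" for p q
  proof -
    have "norm (D p - D q) \<le> norm (B p - B q) + norm (C p - C q)"
      unfolding D_def by (metis add_diff_add norm_triangle_ineq)
    also have "\<dots> \<le> cI * normS (inv S) (B p - B q) + cI * normS (inv S) (C p - C q)"
      using cI(2) by (intro add_mono) auto
    also have "\<dots> \<le> cI * (\<mu> * normS S (p - q)) + cI * (\<beta> * normS S (p - q))"
      using Bn Cn cI(1) by (intro add_mono mult_left_mono) auto
    also have "\<dots> = cI * (\<mu> + \<beta>) * normS S (p - q)" by (simp add: algebra_simps)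
    also have "\<dots> \<le> cI * (\<mu> + \<beta>) * (dS * norm (p - q))"
      using dS(2) cI(1) mu beta by (intro mult_left_mono) auto
    finally show ?thesis unfolding KD_def by (simp add: algebra_simps)
  qed
  define al where "al n = M n (x n) - (B (x n) + C (x n)) + (1 / gam n) *\<^sub>R u n - M n (y n)" for n
  have alA: "al n \<in> A (y n)" for n
  proof -
    obtain a where a: "a \<in> A (y n)" "M n (x n) - (B (x n) + C (x n)) + (1 / gam n) *\<^sub>R u n = M n (y n) + a"
      using y_def[of n] by auto
    then have "al n = a" unfolding al_def by (simp add: algebra_simps)
    with a(1) show ?thesis by simp
  qed
  define v where "v n = al n + D (y n)" for n
  have v_lim: "(\<lambda>n. norm (v n)) \<longlonglongrightarrow> 0"
  proof (rule Lim_null_comparison)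
    define E where "E n = (1 / \<gamma>) * (KS * norm (x n - y n) + norm (u (Suc n))) + (1 / \<gamma>) * norm (u n)
        + cI * (\<mu> * ta n) + cI * (\<beta> * ta n)" for n
    have lc: "(\<lambda>n. (1 / \<gamma>) * (KS * f1 n + f2 n) + (1 / \<gamma>) * f3 n + cI * (\<mu> * f4 n) + cI * (\<beta> * f4 n)) \<longlonglongrightarrow> 0"
      if "f1 \<longlonglongrightarrow> 0" "f2 \<longlonglongrightarrow> 0" "f3 \<longlonglongrightarrow> 0" "f4 \<longlonglongrightarrow> 0" for f1 f2 f3 f4 :: "nat \<Rightarrow> real"
    proof -
      have "(\<lambda>n. (1 / \<gamma>) * (KS * f1 n + f2 n) + (1 / \<gamma>) * f3 n + cI * (\<mu> * f4 n) + cI * (\<beta> * f4 n))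
          \<longlonglongrightarrow> (1 / \<gamma>) * (KS * 0 + 0) + (1 / \<gamma>) * 0 + cI * (\<mu> * 0) + cI * (\<beta> * 0)"
        by (intro tendsto_intros that)
      then show ?thesis by simp
    qed
    show "E \<longlonglongrightarrow> 0" unfolding E_def
      by (rule lc[OF a_lim LIMSEQ_Suc[OF u_lim] u_lim ta_lim])
    show "\<forall>\<^sub>F n in sequentially. norm (norm (v n)) \<le> E n"
    proof (intro always_eventually allI)
      fix n
      define g where "g = gam n"
      have g: "g > 0" "\<gamma> \<le> g" unfolding g_def using g0 gam by auto
      have Mdiff: "M n (x n) - M n (y n) = (1 / g) *\<^sub>R (S (x n - y n) - u (Suc n))"
      proof -
        have "g *\<^sub>R (M n (x n) - M n (y n)) = S (x n - y n) - u (Suc n)"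
          unfolding u_def g_def by (simp add: S.diff algebra_simps)
        then have "(1 / g) *\<^sub>R (g *\<^sub>R (M n (x n) - M n (y n))) = (1 / g) *\<^sub>R (S (x n - y n) - u (Suc n))" by simp
        then show ?thesis using g by simp
      qed
      have veq0: "v n = (M n (x n) - M n (y n)) + (1 / g) *\<^sub>R u n - (B (x n) - B (y n)) - (C (x n) - C (y n))"
        unfolding v_def al_def D_def g_def by (simp add: algebra_simps)
      have veq: "v n = (1 / g) *\<^sub>R (S (x n - y n) - u (Suc n)) + (1 / g) *\<^sub>R u n - (B (x n) - B (y n)) - (C (x n) - C (y n))"
        using veq0 unfolding Mdiff .
      have ig: "1 / g \<le> 1 / \<gamma>" using g gamma by (simp add: frac_le)
      have ig0: "0 \<le> 1 / g" using g by simp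
      have t1: "norm ((1 / g) *\<^sub>R (S (x n - y n) - u (Suc n))) \<le> (1 / \<gamma>) * (KS * norm (x n - y n) + norm (u (Suc n)))"
      proof -
        have "norm (S (x n - y n) - u (Suc n)) \<le> KS * norm (x n - y n) + norm (u (Suc n))"
          using KS(2)[of "x n - y n"] norm_triangle_ineq4[of "S (x n - y n)" "u (Suc n)"] by (simp add: mult.commute)
        note h = this
        have "norm ((1 / g) *\<^sub>R (S (x n - y n) - u (Suc n))) = (1 / g) * norm (S (x n - y n) - u (Suc n))"
          using ig0 by simp
        also have "\<dots> \<le> (1 / \<gamma>) * (KS * norm (x n - y n) + norm (u (Suc n)))"
          by (rule mult_mono[OF ig h]) (use gamma in simp_all)
        finally show ?thesis .
      qed
      have t2: "norm ((1 / g) *\<^sub>R u n) \<le> (1 / \<gamma>) * norm (u n)"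
      proof -
        have "norm ((1 / g) *\<^sub>R u n) = (1 / g) * norm (u n)" using ig0 by simp
        also have "\<dots> \<le> (1 / \<gamma>) * norm (u n)" by (rule mult_right_mono[OF ig]) simp
        finally show ?thesis .
      qed
      have t3: "norm (B (x n) - B (y n)) \<le> cI * (\<mu> * ta n)"
        using cI(2)[of "B (x n) - B (y n)"] Bn[of "x n" "y n"] cI(1) unfolding ta_def
        by (smt (verit) mult_left_mono)
      have t4: "norm (C (x n) - C (y n)) \<le> cI * (\<beta> * ta n)"
        using cI(2)[of "C (x n) - C (y n)"] Cn[of "x n" "y n"] cI(1) unfolding ta_def
        by (smt (verit) mult_left_mono)
      have "norm (v n) \<le> norm ((1 / g) *\<^sub>R (S (x n - y n) - u (Suc n))) + norm ((1 / g) *\<^sub>R u n)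
          + norm (B (x n) - B (y n)) + norm (C (x n) - C (y n))"
        unfolding veq by (meson norm_triangle_ineq norm_triangle_ineq4 order_trans add_mono order_refl)
      then show "norm (norm (v n)) \<le> E n" unfolding E_def using t1 t2 t3 t4 by simp
    qed
  qed
  have ident: "w \<in> F" if sm: "strict_mono \<sigma>" and wl: "\<And>h. (\<lambda>n. inner (x (\<sigma> n)) h) \<longlonglongrightarrow> inner w h" for \<sigma> w
  proof -
    have "0 \<le> inner (q + D p) (p - w)" if pq: "q \<in> A p" for p q
    proof -
      define h where "h = q + D p"
      have ineq: "inner (v n) (p - y n) \<le> inner h (p - y n)" for n
      proof -
        have "0 \<le> inner (q - al n) (p - y n)" using mA pq alA[of n] unfolding monotone_op_def by blast
        moreover have "0 \<le> inner (D p - D (y n)) (p - y n)" by (rule Dmono)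
        ultimately have "0 \<le> inner ((q - al n) + (D p - D (y n))) (p - y n)" by (simp add: inner_add_left)
        moreover have "(q - al n) + (D p - D (y n)) = h - v n" unfolding h_def v_def by (simp add: algebra_simps)
        ultimately show ?thesis by (simp add: inner_diff_left)
      qed
      have l1: "(\<lambda>n. inner h (p - y (\<sigma> n))) \<longlonglongrightarrow> inner h (p - w)"
      proof -
        have e: "inner h (p - y (\<sigma> n)) = inner h p - inner (x (\<sigma> n)) h + inner (x (\<sigma> n) - y (\<sigma> n)) h" for n
          by (simp add: inner_diff_right inner_diff_left inner_commute)
        have a0: "(\<lambda>n. inner (x (\<sigma> n) - y (\<sigma> n)) h) \<longlonglongrightarrow> 0"
        proof (rule Lim_null_comparison)
          show "(\<lambda>n. norm (x (\<sigma> n) - y (\<sigma> n)) * norm h) \<longlonglongrightarrow> 0"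
            using LIMSEQ_subseq_LIMSEQ[OF a_lim sm] by (simp add: o_def tendsto_mult_left_zero)
          show "\<forall>\<^sub>F n in sequentially. norm (inner (x (\<sigma> n) - y (\<sigma> n)) h) \<le> norm (x (\<sigma> n) - y (\<sigma> n)) * norm h"
            by (intro always_eventually allI) (simp add: Cauchy_Schwarz_ineq2)
        qed
        have "(\<lambda>n. inner h p - inner (x (\<sigma> n)) h + inner (x (\<sigma> n) - y (\<sigma> n)) h) \<longlonglongrightarrow> inner h p - inner w h + 0"
          by (intro tendsto_intros wl a0)
        then show ?thesis unfolding e by (simp add: inner_diff_right inner_commute)
      qed
      obtain Ka where Ka: "\<And>n. norm (x n - y n) \<le> Ka"
      proof -
        have "Bseq (\<lambda>n. norm (x n - y n))" using a_lim by (rule convergent_imp_Bseq[OF convergentI])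
        then obtain K where "\<And>n. norm (norm (x n - y n)) \<le> K" by (auto simp: Bseq_def)
        then show ?thesis using that[of K] by simp
      qed
      have l2: "(\<lambda>n. inner (v (\<sigma> n)) (p - y (\<sigma> n))) \<longlonglongrightarrow> 0"
      proof (rule Lim_null_comparison)
        show "(\<lambda>n. norm (v (\<sigma> n)) * (norm p + Rx + Ka)) \<longlonglongrightarrow> 0"
          using LIMSEQ_subseq_LIMSEQ[OF v_lim sm] by (simp add: o_def tendsto_mult_left_zero)
        show "\<forall>\<^sub>F n in sequentially. norm (inner (v (\<sigma> n)) (p - y (\<sigma> n))) \<le> norm (v (\<sigma> n)) * (norm p + Rx + Ka)"
        proof (intro always_eventually allI)
          fix n
          have "norm (p - y (\<sigma> n)) \<le> norm p + norm (x (\<sigma> n)) + norm (x (\<sigma> n) - y (\<sigma> n))"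
          proof -
            have "p - y (\<sigma> n) = (p - x (\<sigma> n)) + (x (\<sigma> n) - y (\<sigma> n))" by (simp add: algebra_simps)
            then have "norm (p - y (\<sigma> n)) \<le> norm (p - x (\<sigma> n)) + norm (x (\<sigma> n) - y (\<sigma> n))"
              using norm_triangle_ineq[of "p - x (\<sigma> n)" "x (\<sigma> n) - y (\<sigma> n)"] by simp
            moreover have "norm (p - x (\<sigma> n)) \<le> norm p + norm (x (\<sigma> n))" by (rule norm_triangle_ineq4)
            ultimately show ?thesis by linarith
          qed
          also have "\<dots> \<le> norm p + Rx + Ka" using xb Ka by (intro add_mono) auto
          finally have np: "norm (p - y (\<sigma> n)) \<le> norm p + Rx + Ka" .
          have "norm (inner (v (\<sigma> n)) (p - y (\<sigma> n))) \<le> norm (v (\<sigma> n)) * norm (p - y (\<sigma> n))"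
            by (simp add: Cauchy_Schwarz_ineq2)
          also have "\<dots> \<le> norm (v (\<sigma> n)) * (norm p + Rx + Ka)" using np by (simp add: mult_left_mono)
          finally show "norm (inner (v (\<sigma> n)) (p - y (\<sigma> n))) \<le> norm (v (\<sigma> n)) * (norm p + Rx + Ka)" .
        qed
      qed
      have "0 \<le> inner h (p - w) - 0"
      proof (rule LIMSEQ_le[of "\<lambda>n. 0"])
        show "(\<lambda>n. 0::real) \<longlonglongrightarrow> 0" by simp
        show "(\<lambda>n. inner h (p - y (\<sigma> n)) - inner (v (\<sigma> n)) (p - y (\<sigma> n))) \<longlonglongrightarrow> inner h (p - w) - 0"
          by (intro tendsto_diff l1 l2)
        show "\<exists>N. \<forall>n\<ge>N. 0 \<le> inner h (p - y (\<sigma> n)) - inner (v (\<sigma> n)) (p - y (\<sigma> n))"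
          using ineq by auto
      qed
      then show ?thesis unfolding h_def by simp
    qed
    then have "- D w \<in> A w" by (intro maxmono_sum_closed[OF A DL]) auto
    moreover have "- D w + B w + C w = 0" unfolding D_def by simp
    ultimately show ?thesis unfolding F_def zer3_def by (metis (mono_tags, lifting) image_eqI mem_Collect_eq)
  qed
  obtain \<sigma>0 w0 where s0: "strict_mono \<sigma>0" "\<And>h. (\<lambda>n. inner (x (\<sigma>0 n)) h) \<longlonglongrightarrow> inner w0 h"
    using weak_compact[of x Rx, OF xb] by blast
  have w0F: "w0 \<in> F" using ident[OF s0] .
  have uniq: "w1 = w0" if s1: "strict_mono \<sigma>1" "\<And>h. (\<lambda>n. inner (x (\<sigma>1 n)) h) \<longlonglongrightarrow> inner w1 h" for \<sigma>1 w1
  proof -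
    have w1F: "w1 \<in> F" using ident[OF s1] .
    define d where "d = S (w0 - w1)"
    have eq: "inner (x n) d = (QS (x n - w1) - QS (x n - w0) - QS w1 + QS w0) / 2" for n
      unfolding d_def QS_diff by (simp add: S.diff inner_diff_right sym field_simps)
    have "convergent (\<lambda>n. inner (x n) d)"
    proof -
      obtain l1 where l1: "(\<lambda>n. QS (x n - w1)) \<longlonglongrightarrow> l1" using QSconv[OF w1F] unfolding convergent_def by blast
      obtain l2 where l2: "(\<lambda>n. QS (x n - w0)) \<longlonglongrightarrow> l2" using QSconv[OF w0F] unfolding convergent_def by blast
      have "(\<lambda>n. (QS (x n - w1) - QS (x n - w0) - QS w1 + QS w0) / 2) \<longlonglongrightarrow> (l1 - l2 - QS w1 + QS w0) / 2"
        by (intro tendsto_intros l1 l2) simp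
      then have "convergent (\<lambda>n. (QS (x n - w1) - QS (x n - w0) - QS w1 + QS w0) / 2)"
        unfolding convergent_def by blast
      then show ?thesis unfolding eq .
    qed
    then obtain lam where lam: "(\<lambda>n. inner (x n) d) \<longlonglongrightarrow> lam" unfolding convergent_def by blast
    have "inner w0 d = lam" using LIMSEQ_subseq_LIMSEQ[OF lam s0(1)] s0(2)[of d] LIMSEQ_unique by (auto simp: o_def)
    moreover have "inner w1 d = lam" using LIMSEQ_subseq_LIMSEQ[OF lam s1(1)] s1(2)[of d] LIMSEQ_unique by (auto simp: o_def)
    ultimately have "inner (w0 - w1) d = 0" by (simp add: inner_diff_left)
    then have "QS (w0 - w1) = 0" unfolding d_def QS_def by (simp add: inner_commute)
    then show ?thesis using QS_zero_iff by simp
  qed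
  have "weakly_converges x w0"
    unfolding weakly_converges_def
  proof
    fix h
    show "(\<lambda>k. inner (x k) h) \<longlonglongrightarrow> inner w0 h"
    proof (rule ccontr)
      assume "\<not> (\<lambda>k. inner (x k) h) \<longlonglongrightarrow> inner w0 h"
      then obtain e \<tau> where e: "e > 0" "strict_mono (\<tau> :: nat \<Rightarrow> nat)" "\<And>n. e \<le> \<bar>inner (x (\<tau> n)) h - inner w0 h\<bar>"
        using not_tendsto_subseq by blast
      obtain \<rho> w1 where r: "strict_mono \<rho>" "\<And>h. (\<lambda>n. inner (x (\<tau> (\<rho> n))) h) \<longlonglongrightarrow> inner w1 h"
        using weak_compact[of "\<lambda>n. x (\<tau> n)" Rx] xb by blast
      have sm1: "strict_mono (\<tau> \<circ> \<rho>)" using e(2) r(1) by (rule strict_mono_o)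
      have w1: "w1 = w0" using uniq[OF sm1] r(2) by (simp add: o_def)
      have "e \<le> \<bar>inner w1 h - inner w0 h\<bar>"
      proof (rule LIMSEQ_le_const)
        show "(\<lambda>n. \<bar>inner (x (\<tau> (\<rho> n))) h - inner w0 h\<bar>) \<longlonglongrightarrow> \<bar>inner w1 h - inner w0 h\<bar>"
          by (intro tendsto_intros r(2))
        show "\<exists>N. \<forall>n\<ge>N. e \<le> \<bar>inner (x (\<tau> (\<rho> n))) h - inner w0 h\<bar>" using e(3) by blast
      qed
      with w1 e(1) show False by simp
    qed
  qed
  then show ?thesis using w0F unfolding F_def by blast
qed

end
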